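(* In the limited-feedback setting of the context, for a given transmission rate $R_1>0$, the optimal throughput $\gamma^*$ satisfies $\gamma_L\le\gamma^*\le\gamma_U$, where $$\gamma_L=\frac{(1-\tau)R_1}{(1-\tau)+\tau\left(1+\frac{1}{p_s}\right)e^{R_1/E[R^{(2)}]}},\qquad \gamma_U=\frac{R_1}{1+\frac{\tau}{p_s}}.$$
   Context: Setting (distributed opportunistic scheduling with two-level probing and $(0,1,e)$ feedback). Fix $p_s\in(0,1)$, $\tau\in(0,1)$, data transmission duration normalized to $1$, and a fixed transmission rate $R_1>0$ known to the transmitter. Let $K_1,K_2,\dots$ be i.i.d. geometric on $\{1,2,\dots\}$ with parameter $p_s$. Let $(R_n^{(1)},R_n^{(2)})$, $n\ge1$, be i.i.d. pairs independent of $(K_j)$, with $R_n^{(1)}$ exponential with mean $E[R^{(1)}]>0$, and conditionally on $R_n^{(1)}=x$, $R_n^{(2)}$ distributed as $|\sqrt{c_rx}+z|^2$ with constants $c_r>0$, $R_e>0$ and $z$ circularly symmetric complex Gaussian with $E|z|^2=R_e$; $R_n^{(2)}$ is then exponential with mean $E[R^{(2)}]=c_rE[R^{(1)}]+R_e$. In round $n$ (reached after contention time $\sum_{j\le n}K_j\tau$) the receiver of the successful link observes $R_n^{(1)}$ and feeds back "1" (transmit at rate $R_1$ for duration $1$, which yields reward $R_1$ if $R_n^{(1)}\ge R_1$ and $0$ otherwise), "0" (defer, all links re-contend, go to round $n+1$), or "e" (perform second-level probing at time cost $\tau$, observe $R_n^{(2)}$, then feed back "1" = transmit at rate $R_1$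 for duration $1-\tau$, yielding reward $R_1$ per unit time if $R_n^{(2)}\ge R_1$ and $0$ otherwise, or "0" = defer and re-contend). With $N$ the round of transmission, $R_N$ the achieved rate, $T_{d,N}\in\{1,1-\tau\}$ the transmission duration and $T_N$ the total elapsed time (contention times, second-level probing times, and final transmission period of total length 1), the optimal throughput for the given $R_1$ is $\gamma^*=\sup_N E[R_NT_{d,N}]/E[T_N]$ over stopping rules with $N\ge1$, $E[T_N]<\infty$. *)

theory Defs
  imports "HOL-Probability.Probability"
begin

text \<open>Per-round primitive randomness: (K - 1, R1, Re0(z), Im(z)), where K - 1 is geometric on
  {0,1,...} with success probability ps (so K is geometric on {1,2,...}), R1 is exponential
  with mean m1, and z = zr + i zi is circularly symmetric complex Gaussian with E|z|^2 = Re0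
  (zr, zi i.i.d. N(0, Re0/2)).\<close>

type_synonym obs = "nat \<times> real \<times> real \<times> real"

definition round_dist :: "real \<Rightarrow> real \<Rightarrow> real \<Rightarrow> obs measure" where
  "round_dist ps m1 Re0 =
     measure_pmf (geometric_pmf ps) \<Otimes>\<^sub>M
       (density lborel (exponential_density (1 / m1)) \<Otimes>\<^sub>M
         (density lborel (normal_density 0 (sqrt (Re0 / 2))) \<Otimes>\<^sub>M
          density lborel (normal_density 0 (sqrt (Re0 / 2)))))"

text \<open>The whole sample space: i.i.d. rounds indexed by n = 0,1,2,... (round n+1 of the paper).\<close>
definition sample_space :: "real \<Rightarrow> real \<Rightarrow> real \<Rightarrow> (nat \<Rightarrow> obs) measure" where
  "sample_space ps m1 Re0 = PiM UNIV (\<lambda>_. round_dist ps m1 Re0)"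

definition Kof :: "(nat \<Rightarrow> obs) \<Rightarrow> nat \<Rightarrow> nat" where
  "Kof \<omega> n = fst (\<omega> n) + 1"

definition R1of :: "(nat \<Rightarrow> obs) \<Rightarrow> nat \<Rightarrow> real" where
  "R1of \<omega> n = fst (snd (\<omega> n))"

definition R2of :: "real \<Rightarrow> (nat \<Rightarrow> obs) \<Rightarrow> nat \<Rightarrow> real" where
  "R2of cr \<omega> n = (sqrt (cr * R1of \<omega> n) + fst (snd (snd (\<omega> n))))\<^sup>2 + (snd (snd (snd (\<omega> n))))\<^sup>2"

text \<open>First-level feedback: 1 = Transmit, 0 = Defer, e = Probe.\<close>
datatype dec = Transmit | Defer | Probe

text \<open>Observed history of past rounds: contention duration K_j, R1_j, and R2_j if it was probed.\<close>
type_synonym hist = "(nat \<times> real \<times> real option) list"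

text \<open>A (deterministic, non-anticipating) stopping rule: the first-level decision depends on the
  past history and the current (K, R1); after probing, the second-level decision (True = transmit,
  False = defer) depends additionally on the current R2.\<close>
type_synonym policy = "(hist \<Rightarrow> nat \<times> real \<Rightarrow> dec) \<times> (hist \<Rightarrow> nat \<times> real \<times> real \<Rightarrow> bool)"

fun hist_of :: "real \<Rightarrow> policy \<Rightarrow> (nat \<Rightarrow> obs) \<Rightarrow> nat \<Rightarrow> hist" where
  "hist_of cr P \<omega> 0 = []"
| "hist_of cr P \<omega> (Suc m) = hist_of cr P \<omega> m @
     [(Kof \<omega> m, R1of \<omega> m,
       if fst P (hist_of cr P \<omega> m) (Kof \<omega> m, R1of \<omega> m) = Probe then Some (R2of cr \<omega> m) else None)]"

definition dec1 :: "real \<Rightarrow> policy \<Rightarrow> (nat \<Rightarrow> obs) \<Rightarrow> nat \<Rightarrow> dec" where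
  "dec1 cr P \<omega> m = fst P (hist_of cr P \<omega> m) (Kof \<omega> m, R1of \<omega> m)"

definition stops :: "real \<Rightarrow> policy \<Rightarrow> (nat \<Rightarrow> obs) \<Rightarrow> nat \<Rightarrow> bool" where
  "stops cr P \<omega> m \<longleftrightarrow> dec1 cr P \<omega> m = Transmit \<or>
     (dec1 cr P \<omega> m = Probe \<and> snd P (hist_of cr P \<omega> m) (Kof \<omega> m, R1of \<omega> m, R2of cr \<omega> m))"

text \<open>Transmission round N (0-indexed).\<close>
definition stop_round :: "real \<Rightarrow> policy \<Rightarrow> (nat \<Rightarrow> obs) \<Rightarrow> nat" where
  "stop_round cr P \<omega> = (LEAST m. stops cr P \<omega> m)"

text \<open>T_N: contention times of rounds 1..N, second-level probing times in rounds before N,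
  and the final period of total length 1 (probing plus transmission if probed in round N).\<close>
definition total_time :: "real \<Rightarrow> real \<Rightarrow> policy \<Rightarrow> (nat \<Rightarrow> obs) \<Rightarrow> real" where
  "total_time tau cr P \<omega> =
     (let N = stop_round cr P \<omega> in
      (\<Sum>j\<le>N. real (Kof \<omega> j) * tau) + tau * real (card {j. j < N \<and> dec1 cr P \<omega> j = Probe}) + 1)"

definition reward :: "real \<Rightarrow> real \<Rightarrow> real \<Rightarrow> policy \<Rightarrow> (nat \<Rightarrow> obs) \<Rightarrow> real" where
  "reward R1 tau cr P \<omega> =
     (let N = stop_round cr P \<omega> in
      if dec1 cr P \<omega> N = Transmit then (if R1of \<omega> N \<ge> R1 then R1 else 0)
      else (if R2of cr \<omega> N \<ge> R1 then R1 * (1 - tau) else 0))"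

definition admissible :: "real \<Rightarrow> real \<Rightarrow> real \<Rightarrow> real \<Rightarrow> real \<Rightarrow> real \<Rightarrow> policy \<Rightarrow> bool" where
  "admissible ps tau R1 m1 cr Re0 P \<longleftrightarrow>
     (AE \<omega> in sample_space ps m1 Re0. \<exists>m. stops cr P \<omega> m) \<and>
     total_time tau cr P \<in> borel_measurable (sample_space ps m1 Re0) \<and>
     reward R1 tau cr P \<in> borel_measurable (sample_space ps m1 Re0) \<and>
     integrable (sample_space ps m1 Re0) (total_time tau cr P)"

definition opt_throughput :: "real \<Rightarrow> real \<Rightarrow> real \<Rightarrow> real \<Rightarrow> real \<Rightarrow> real \<Rightarrow> real" where
  "opt_throughput ps tau R1 m1 cr Re0 =
     Sup {(\<integral>\<omega>. reward R1 tau cr P \<omega> \<partial>sample_space ps m1 Re0) /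
          (\<integral>\<omega>. total_time tau cr P \<omega> \<partial>sample_space ps m1 Re0) | P. admissible ps tau R1 m1 cr Re0 P}"

end

theory Submission
  imports Defs "HOL-Real_Asymp.Real_Asymp"
begin

definition I2 :: "(real \<times> real \<Rightarrow> ennreal) \<Rightarrow> ennreal" where
  "I2 f = (\<integral>\<^sup>+ p. f p \<partial>(lborel \<Otimes>\<^sub>M lborel))"

lemma shearA:
  assumes f[measurable]: "f \<in> borel_measurable (lborel \<Otimes>\<^sub>M lborel)"
  shows "I2 (\<lambda>p. f (fst p + k * snd p, snd p)) = I2 f"
proof -
  have "I2 (\<lambda>p. f (fst p + k * snd p, snd p)) = (\<integral>\<^sup>+ b. \<integral>\<^sup>+ a. f (a + k * b, b) \<partial>lborel \<partial>lborel)"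
    unfolding I2_def by (subst lborel_pair.nn_integral_snd[symmetric]) auto
  also have "\<dots> = (\<integral>\<^sup>+ b. \<integral>\<^sup>+ a. f (a, b) \<partial>lborel \<partial>lborel)"
  proof (rule nn_integral_cong)
    fix b :: real
    show "(\<integral>\<^sup>+ a. f (a + k * b, b) \<partial>lborel) = (\<integral>\<^sup>+ a. f (a, b) \<partial>lborel)"
      using nn_integral_real_affine[of "\<lambda>a. f (a, b)" 1 "k*b"] by (simp add: add.commute)
  qed
  also have "\<dots> = I2 f"
    unfolding I2_def by (subst lborel_pair.nn_integral_snd) auto
  finally show ?thesis .
qed

lemma shearB:
  assumes f[measurable]: "f \<in> borel_measurable (lborel \<Otimes>\<^sub>M lborel)"
  shows "I2 (\<lambda>p. f (fst p, snd p + k * fst p)) = I2 f"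
proof -
  have "I2 (\<lambda>p. f (fst p, snd p + k * fst p)) = (\<integral>\<^sup>+ a. \<integral>\<^sup>+ b. f (a, b + k * a) \<partial>lborel \<partial>lborel)"
    unfolding I2_def by (subst lborel.nn_integral_fst[symmetric]) auto
  also have "\<dots> = (\<integral>\<^sup>+ a. \<integral>\<^sup>+ b. f (a, b) \<partial>lborel \<partial>lborel)"
  proof (rule nn_integral_cong)
    fix a :: real
    show "(\<integral>\<^sup>+ b. f (a, b + k * a) \<partial>lborel) = (\<integral>\<^sup>+ b. f (a, b) \<partial>lborel)"
      using nn_integral_real_affine[of "\<lambda>b. f (a, b)" 1 "k*a"] by (simp add: add.commute)
  qed
  also have "\<dots> = I2 f"
    unfolding I2_def by (subst lborel.nn_integral_fst) auto
  finally show ?thesis .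
qed

lemma negI2:
  assumes f[measurable]: "f \<in> borel_measurable (lborel \<Otimes>\<^sub>M lborel)"
  shows "I2 (\<lambda>p. f (- fst p, - snd p)) = I2 f"
proof -
  have "I2 (\<lambda>p. f (- fst p, - snd p)) = (\<integral>\<^sup>+ a. \<integral>\<^sup>+ b. f (- a, - b) \<partial>lborel \<partial>lborel)"
    unfolding I2_def by (subst lborel.nn_integral_fst[symmetric]) auto
  also have "\<dots> = (\<integral>\<^sup>+ a. \<integral>\<^sup>+ b. f (- a, b) \<partial>lborel \<partial>lborel)"
  proof (rule nn_integral_cong)
    fix a :: real
    show "(\<integral>\<^sup>+ b. f (- a, - b) \<partial>lborel) = (\<integral>\<^sup>+ b. f (- a, b) \<partial>lborel)"
      using nn_integral_real_affine[of "\<lambda>b. f (- a, b)" "-1" 0] by simp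
  qed
  also have "\<dots> = (\<integral>\<^sup>+ b. \<integral>\<^sup>+ a. f (- a, b) \<partial>lborel \<partial>lborel)"
    by (subst lborel_pair.Fubini') auto
  also have "\<dots> = (\<integral>\<^sup>+ b. \<integral>\<^sup>+ a. f (a, b) \<partial>lborel \<partial>lborel)"
  proof (rule nn_integral_cong)
    fix b :: real
    show "(\<integral>\<^sup>+ a. f (- a, b) \<partial>lborel) = (\<integral>\<^sup>+ a. f (a, b) \<partial>lborel)"
      using nn_integral_real_affine[of "\<lambda>a. f (a, b)" "-1" 0] by simp
  qed
  also have "\<dots> = I2 f"
    unfolding I2_def by (subst lborel_pair.nn_integral_snd) auto
  finally show ?thesis .
qed

definition rot :: "real \<Rightarrow> real \<Rightarrow> real \<times> real \<Rightarrow> real \<times> real" where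
  "rot c s p = (c * fst p - s * snd p, s * fst p + c * snd p)"

lemma rot_measurable[measurable]: "rot c s \<in> borel_measurable (lborel \<Otimes>\<^sub>M lborel)"
  unfolding rot_def by measurable

lemma rotI2:
  assumes f[measurable]: "f \<in> borel_measurable (lborel \<Otimes>\<^sub>M lborel)"
    and cs: "c\<^sup>2 + s\<^sup>2 = 1"
  shows "I2 (\<lambda>p. f (rot c s p)) = I2 f"
proof (cases "c = -1")
  case True
  then have "s = 0" using cs by simp
  then show ?thesis using True negI2[OF f] by (simp add: rot_def)
next
  case False
  have "c\<^sup>2 \<le> 1" using cs by (smt (verit) zero_le_power2)
  then have "\<bar>c\<bar> \<le> 1" by (simp add: abs_square_le_1)
  then have "c \<ge> -1" by simp
  with False have c1: "1 + c > 0" by simp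
  define t where "t = s / (1 + c)"
  have ts: "t * (1 + c) = s" using c1 by (simp add: t_def)
  have sc: "1 - s * t = c"
  proof -
    have "s * t * (1 + c) = s * s" using ts by (simp add: algebra_simps)
    also have "\<dots> = (1 - c) * (1 + c)" using cs by (simp add: power2_eq_square algebra_simps)
    finally have "s * t = 1 - c" using c1 by simp
    then show ?thesis by simp
  qed
  define g3 where "g3 = (\<lambda>p. f (fst p + (-t) * snd p, snd p))"
  define g2 where "g2 = (\<lambda>p. g3 (fst p, snd p + s * fst p))"
  have [measurable]: "g3 \<in> borel_measurable (lborel \<Otimes>\<^sub>M lborel)" unfolding g3_def by measurable
  have [measurable]: "g2 \<in> borel_measurable (lborel \<Otimes>\<^sub>M lborel)" unfolding g2_def by measurable
  have eq: "(\<lambda>p. f (rot c s p)) = (\<lambda>p. g2 (fst p + (-t) * snd p, snd p))"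
  proof
    fix p :: "real \<times> real"
    obtain x y where p: "p = (x, y)" by (cases p)
    have e1: "x + - t * y + - t * (y + s * (x + - t * y)) = c * x - s * y"
    proof -
      have "x + - t * y + - t * (y + s * (x + - t * y)) = (1 - s*t) * x - t * (1 + (1 - s * t)) * y"
        by (simp add: algebra_simps)
      also have "\<dots> = c * x - t * (1 + c) * y" unfolding sc ..
      also have "\<dots> = c * x - s * y" unfolding ts ..
      finally show ?thesis .
    qed
    have e2: "y + s * (x + - t * y) = s * x + c * y"
    proof -
      have "y + s * (x + - t * y) = s * x + (1 - s * t) * y" by (simp add: algebra_simps)
      then show ?thesis unfolding sc .
    qed
    show "f (rot c s p) = g2 (fst p + (-t) * snd p, snd p)"
      unfolding g2_def g3_def rot_def p using e1 e2 by simp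
  qed
  have "I2 (\<lambda>p. f (rot c s p)) = I2 g2" unfolding eq by (rule shearA) measurable
  also have "\<dots> = I2 g3" unfolding g2_def by (rule shearB) measurable
  also have "\<dots> = I2 f" unfolding g3_def by (rule shearA) measurable
  finally show ?thesis .
qed

lemma even1:
  fixes h :: "real \<Rightarrow> ennreal"
  assumes h[measurable]: "h \<in> borel_measurable borel" and ev: "\<And>x. h (- x) = h x"
  shows "(\<integral>\<^sup>+ x. h x \<partial>lborel) = 2 * (\<integral>\<^sup>+ x. h x * indicator {0<..} x \<partial>lborel)"
proof -
  have "(\<integral>\<^sup>+ x. h x \<partial>lborel) = (\<integral>\<^sup>+ x. h x * indicator {0<..} x + h x * indicator {..<0} x \<partial>lborel)"
    by (intro nn_integral_cong_AE AE_I[where N="{0}"]) (auto split: split_indicator)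
  also have "\<dots> = (\<integral>\<^sup>+ x. h x * indicator {0<..} x \<partial>lborel) + (\<integral>\<^sup>+ x. h x * indicator {..<0} x \<partial>lborel)"
    by (rule nn_integral_add) auto
  also have "(\<integral>\<^sup>+ x. h x * indicator {..<0} x \<partial>lborel) = (\<integral>\<^sup>+ x. h (- x) * indicator {..<0} (- x) \<partial>lborel)"
    using nn_integral_real_affine[of "\<lambda>x. h x * indicator {..<0} x" "-1" 0] by simp
  also have "\<dots> = (\<integral>\<^sup>+ x. h x * indicator {0<..} x \<partial>lborel)"
    by (intro nn_integral_cong) (auto simp: ev split: split_indicator)
  finally show ?thesis by (simp add: mult_2)
qed

lemma even2:
  fixes g :: "real \<times> real \<Rightarrow> ennreal"
  assumes g[measurable]: "g \<in> borel_measurable (lborel \<Otimes>\<^sub>M lborel)"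
    and ev1: "\<And>a b. g (- a, b) = g (a, b)" and ev2: "\<And>a b. g (a, - b) = g (a, b)"
  shows "I2 g = 4 * (\<integral>\<^sup>+ a. \<integral>\<^sup>+ b. g (a, b) * indicator {0<..} b * indicator {0<..} a \<partial>lborel \<partial>lborel)"
proof -
  have "I2 g = (\<integral>\<^sup>+ a. \<integral>\<^sup>+ b. g (a, b) \<partial>lborel \<partial>lborel)"
    unfolding I2_def by (subst lborel.nn_integral_fst) auto
  also have "\<dots> = (\<integral>\<^sup>+ a. 2 * \<integral>\<^sup>+ b. g (a, b) * indicator {0<..} b \<partial>lborel \<partial>lborel)"
    by (intro nn_integral_cong even1) (auto simp: ev2)
  also have "\<dots> = 2 * (\<integral>\<^sup>+ a. \<integral>\<^sup>+ b. g (a, b) * indicator {0<..} b \<partial>lborel \<partial>lborel)"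
    by (rule nn_integral_cmult) measurable
  also have "(\<integral>\<^sup>+ a. \<integral>\<^sup>+ b. g (a, b) * indicator {0<..} b \<partial>lborel \<partial>lborel)
     = 2 * (\<integral>\<^sup>+ a. (\<integral>\<^sup>+ b. g (a, b) * indicator {0<..} b \<partial>lborel) * indicator {0<..} a \<partial>lborel)"
    by (rule even1) (auto simp: ev1)
  also have "(\<integral>\<^sup>+ a. (\<integral>\<^sup>+ b. g (a, b) * indicator {0<..} b \<partial>lborel) * indicator {0<..} a \<partial>lborel)
     = (\<integral>\<^sup>+ a. \<integral>\<^sup>+ b. g (a, b) * indicator {0<..} b * indicator {0<..} a \<partial>lborel \<partial>lborel)"
    by (intro nn_integral_cong) (simp add: nn_integral_multc)
  finally show ?thesis by (simp add: mult.assoc[symmetric])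
qed

lemma arctan_integral: "(\<integral>\<^sup>+ u. ennreal (1 / (1 + u\<^sup>2)) * indicator {0<..} u \<partial>lborel) = ennreal (pi / 2)"
proof -
  have "(\<integral>\<^sup>+ u. ennreal (1 / (1 + u\<^sup>2)) * indicator {0<..} u \<partial>lborel)
      = (\<integral>\<^sup>+ u. ennreal (1 / (1 + u\<^sup>2)) * indicator {0..} u \<partial>lborel)"
    by (intro nn_integral_cong_AE AE_I[where N="{0}"]) (auto split: split_indicator)
  also have "\<dots> = ennreal (pi / 2 - arctan 0)"
  proof (rule nn_integral_FTC_atLeast)
    show "(arctan \<longlongrightarrow> pi / 2) at_top" by (rule tendsto_arctan_at_top)
  qed (auto intro!: derivative_eq_intros simp: add_nonneg_eq_0_iff field_simps power2_eq_square)
  finally show ?thesis by simp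
qed

lemma gauss_tail_integral:
  fixes w v T r :: real
  assumes w: "w > 0" and v: "v > 0" and T: "T \<ge> 0" and r: "r = sqrt (T / w)"
  shows "(\<integral>\<^sup>+ a. ennreal (a * exp (- (a\<^sup>2 * w) / v)) * indicator {r..} a \<partial>lborel)
     = ennreal (v / (2 * w) * exp (- T / v))"
proof -
  let ?F = "\<lambda>a. - (v / (2 * w)) * exp (- (a\<^sup>2 * w) / v)"
  have "0 \<le> T / w" using T w by simp
  then have "r\<^sup>2 = T / w" using r by simp
  then have Fr: "?F r = - (v / (2 * w) * exp (- T / v))" using w by simp
  have r0: "r \<ge> 0" using r \<open>0 \<le> T / w\<close> by simp
  have lim: "(?F \<longlongrightarrow> 0) at_top"
    using w v by real_asymp
  have "(\<integral>\<^sup>+ a. ennreal (a * exp (- (a\<^sup>2 * w) / v)) * indicator {r..} a \<partial>lborel) = ennreal (0 - ?F r)"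
  proof (rule nn_integral_FTC_atLeast[OF _ _ _ lim])
    fix x assume "r \<le> x"
    then show "0 \<le> x * exp (- (x\<^sup>2 * w) / v)" using r0 by simp
  next
    fix x :: real
    show "DERIV ?F x :> x * exp (- (x\<^sup>2 * w) / v)"
      using w v by (auto intro!: derivative_eq_intros simp: field_simps power2_eq_square)
  qed measurable
  also have "\<dots> = ennreal (v / (2 * w) * exp (- T / v))"
    unfolding Fr by simp
  finally show ?thesis .
qed

definition Ef :: "real \<Rightarrow> real \<Rightarrow> real \<times> real \<Rightarrow> ennreal" where
  "Ef v T p = ennreal (exp (- ((fst p)\<^sup>2 + (snd p)\<^sup>2) / v)) * indicator {p. T < (fst p)\<^sup>2 + (snd p)\<^sup>2} p"

lemma Ef_measurable[measurable]: "Ef v T \<in> borel_measurable (lborel \<Otimes>\<^sub>M lborel)"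
  unfolding Ef_def by measurable

lemma quad:
  assumes v: "v > 0" and T: "T \<ge> 0"
  shows "(\<integral>\<^sup>+ a. \<integral>\<^sup>+ b. Ef v T (a, b) * indicator {0<..} b * indicator {0<..} a \<partial>lborel \<partial>lborel)
     = ennreal (v * pi / 4 * exp (- T / v))"
proof -
  define ff where "ff = (\<lambda>a u::real. ennreal (a * exp (- (a\<^sup>2 * (1 + u\<^sup>2)) / v))
      * indicator {x. T < x} (a\<^sup>2 * (1 + u\<^sup>2)) * indicator {0<..} u * indicator {0<..} a)"
  have [measurable]: "case_prod ff \<in> borel_measurable (lborel \<Otimes>\<^sub>M lborel)"
    unfolding ff_def by measurable
  have step1: "(\<integral>\<^sup>+ b. Ef v T (a, b) * indicator {0<..} b * indicator {0<..} a \<partial>lborel)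
      = (\<integral>\<^sup>+ u. ff a u \<partial>lborel)" for a
  proof (cases "a > 0")
    case False
    then show ?thesis by (simp add: ff_def)
  next
    case True
    have "(\<integral>\<^sup>+ b. Ef v T (a, b) * indicator {0<..} b * indicator {0<..} a \<partial>lborel)
       = ennreal \<bar>a\<bar> * (\<integral>\<^sup>+ u. Ef v T (a, 0 + a * u) * indicator {0<..} (0 + a * u) * indicator {0<..} a \<partial>lborel)"
      using True by (intro nn_integral_real_affine) auto
    also have "\<dots> = (\<integral>\<^sup>+ u. ennreal \<bar>a\<bar> * (Ef v T (a, 0 + a * u) * indicator {0<..} (0 + a * u) * indicator {0<..} a) \<partial>lborel)"
      by (rule nn_integral_cmult[symmetric]) measurable
    also have "\<dots> = (\<integral>\<^sup>+ u. ff a u \<partial>lborel)"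
    proof (rule nn_integral_cong)
      fix u :: real
      have e: "a\<^sup>2 + (a * u)\<^sup>2 = a\<^sup>2 * (1 + u\<^sup>2)" by (simp add: algebra_simps power_mult_distrib)
      have E: "Ef v T (a, 0 + a * u) = ennreal (exp (- (a\<^sup>2 * (1 + u\<^sup>2)) / v)) * indicator {x. T < x} (a\<^sup>2 * (1 + u\<^sup>2))"
        unfolding Ef_def fst_conv snd_conv add_0_left e by (simp add: e split: split_indicator)
      show "ennreal \<bar>a\<bar> * (Ef v T (a, 0 + a * u) * indicator {0<..} (0 + a * u) * indicator {0<..} a) = ff a u"
        using True unfolding ff_def E
        by (auto simp: ennreal_mult'' zero_less_mult_iff split: split_indicator)
    qed
    finally show ?thesis .
  qed
  have step3: "(\<integral>\<^sup>+ a. ff a u \<partial>lborel) = ennreal (v / (2 * (1 + u\<^sup>2)) * exp (- T / v)) * indicator {0<..} u" for u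
  proof (cases "u > 0")
    case False
    then show ?thesis by (simp add: ff_def)
  next
    case True
    define w where "w = 1 + u\<^sup>2"
    have w: "w > 0" unfolding w_def by (simp add: add_pos_nonneg)
    define r where "r = sqrt (T / w)"
    have "0 \<le> T / w" using T w by simp
    then have r2: "r\<^sup>2 = T / w" and r0: "r \<ge> 0" unfolding r_def by simp_all
    have "(\<integral>\<^sup>+ a. ff a u \<partial>lborel) = (\<integral>\<^sup>+ a. ennreal (a * exp (- (a\<^sup>2 * w) / v)) * indicator {r..} a \<partial>lborel)"
    proof (intro nn_integral_cong_AE AE_I[where N="{r}"])
      show "{a \<in> space lborel. ff a u \<noteq> ennreal (a * exp (- (a\<^sup>2 * w) / v)) * indicator {r..} a} \<subseteq> {r}"
      proof safe
        fix a assume ne: "ff a u \<noteq> ennreal (a * exp (- (a\<^sup>2 * w) / v)) * indicator {r..} a"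
        show "a = r"
        proof (rule ccontr)
          assume "a \<noteq> r"
          have iff: "(T < a\<^sup>2 * w \<and> 0 < a) \<longleftrightarrow> r \<le> a"
          proof
            assume h: "T < a\<^sup>2 * w \<and> 0 < a"
            show "r \<le> a"
            proof (rule ccontr)
              assume "\<not> r \<le> a"
              then have "a\<^sup>2 \<le> r\<^sup>2" using h by (intro power_mono) auto
              then have "a\<^sup>2 * w \<le> T" using r2 w by (simp add: field_simps)
              then show False using h by simp
            qed
          next
            assume "r \<le> a"
            then have "r < a" using \<open>a \<noteq> r\<close> by simp
            then have "0 < a" using r0 by simp
            moreover have "r\<^sup>2 < a\<^sup>2" using \<open>r < a\<close> r0 by (intro power_strict_mono) auto
            then have "T < a\<^sup>2 * w" using r2 w by (simp add: field_simps)
            ultimately show "T < a\<^sup>2 * w \<and> 0 < a" by simp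
          qed
          have "ff a u = ennreal (a * exp (- (a\<^sup>2 * w) / v)) * indicator {r..} a"
            using True iff unfolding ff_def w_def[symmetric]
            by (auto split: split_indicator)
          then show False using ne by simp
        qed
      qed
    qed auto
    also have "\<dots> = ennreal (v / (2 * w) * exp (- T / v))"
      by (rule gauss_tail_integral[OF w v T r_def])
    finally show ?thesis using True by (simp add: w_def)
  qed
  have "(\<integral>\<^sup>+ a. \<integral>\<^sup>+ b. Ef v T (a, b) * indicator {0<..} b * indicator {0<..} a \<partial>lborel \<partial>lborel)
      = (\<integral>\<^sup>+ a. \<integral>\<^sup>+ u. ff a u \<partial>lborel \<partial>lborel)"
    by (intro nn_integral_cong step1)
  also have "\<dots> = (\<integral>\<^sup>+ u. \<integral>\<^sup>+ a. ff a u \<partial>lborel \<partial>lborel)"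
    by (rule lborel_pair.Fubini'[symmetric]) measurable
  also have "\<dots> = (\<integral>\<^sup>+ u. ennreal (v / 2 * exp (- T / v)) * (ennreal (1 / (1 + u\<^sup>2)) * indicator {0<..} u) \<partial>lborel)"
    unfolding step3
    by (intro nn_integral_cong) (simp add: ennreal_mult''[symmetric] mult.assoc[symmetric] add_pos_nonneg)
  also have "\<dots> = ennreal (v / 2 * exp (- T / v)) * (\<integral>\<^sup>+ u. ennreal (1 / (1 + u\<^sup>2)) * indicator {0<..} u \<partial>lborel)"
    by (rule nn_integral_cmult) measurable
  also have "\<dots> = ennreal (v * pi / 4 * exp (- T / v))"
    unfolding arctan_integral using v by (simp add: ennreal_mult''[symmetric])
  finally show ?thesis .
qed

lemma I2_Ef:
  assumes v: "v > 0" and T: "T \<ge> 0"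
  shows "I2 (Ef v T) = ennreal (v * pi * exp (- T / v))"
proof -
  have "I2 (Ef v T) = 4 * (\<integral>\<^sup>+ a. \<integral>\<^sup>+ b. Ef v T (a, b) * indicator {0<..} b * indicator {0<..} a \<partial>lborel \<partial>lborel)"
    by (rule even2) (auto simp: Ef_def split: split_indicator)
  also have "\<dots> = 4 * ennreal (v * pi / 4 * exp (- T / v))"
    unfolding quad[OF v T] ..
  also have "\<dots> = ennreal (v * pi * exp (- T / v))"
    using ennreal_mult'[of 4 "v * pi / 4 * exp (- T / v)"] by simp
  finally show ?thesis .
qed

definition N2 :: "real \<Rightarrow> (real \<times> real) measure" where
  "N2 \<sigma> = density lborel (normal_density 0 \<sigma>) \<Otimes>\<^sub>M density lborel (normal_density 0 \<sigma>)"

lemma sets_N2[simp, measurable_cong]: "sets (N2 \<sigma>) = sets (lborel \<Otimes>\<^sub>M lborel)"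
  unfolding N2_def by (intro sets_pair_measure_cong) simp_all

lemma prob_space_N2: "\<sigma> > 0 \<Longrightarrow> prob_space (N2 \<sigma>)"
  unfolding N2_def
  by (intro prob_space_pair prob_space_normal_density) auto

lemma N2_density: "\<sigma> > 0 \<Longrightarrow> N2 \<sigma> = density (lborel \<Otimes>\<^sub>M lborel) (\<lambda>(x,y). ennreal (normal_density 0 \<sigma> x) * ennreal (normal_density 0 \<sigma> y))"
  unfolding N2_def
  by (rule pair_measure_density)
     (auto intro!: prob_space_imp_sigma_finite prob_space_normal_density lborel.sigma_finite_measure_axioms)

lemma phi2: "\<sigma> > 0 \<Longrightarrow> normal_density 0 \<sigma> a * normal_density 0 \<sigma> b
   = exp (- (a\<^sup>2 + b\<^sup>2) / (2 * \<sigma>\<^sup>2)) / (2 * pi * \<sigma>\<^sup>2)"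
proof -
  assume s: "\<sigma> > 0"
  have q: "sqrt (2 * pi * \<sigma>\<^sup>2) * sqrt (2 * pi * \<sigma>\<^sup>2) = 2 * pi * \<sigma>\<^sup>2" by simp
  have "normal_density 0 \<sigma> a * normal_density 0 \<sigma> b
     = (exp (- a\<^sup>2 / (2 * \<sigma>\<^sup>2)) * exp (- b\<^sup>2 / (2 * \<sigma>\<^sup>2))) / (sqrt (2 * pi * \<sigma>\<^sup>2) * sqrt (2 * pi * \<sigma>\<^sup>2))"
    unfolding normal_density_def by simp
  also have "\<dots> = exp (- (a\<^sup>2 + b\<^sup>2) / (2 * \<sigma>\<^sup>2)) / (2 * pi * \<sigma>\<^sup>2)"
    unfolding q mult_exp_exp by (simp add: diff_divide_distrib)
  finally show ?thesis .
qed

lemma N2_integral: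
  assumes s: "\<sigma> > 0" and f[measurable]: "f \<in> borel_measurable (lborel \<Otimes>\<^sub>M lborel)"
  shows "(\<integral>\<^sup>+ p. f p \<partial>N2 \<sigma>) = I2 (\<lambda>p. ennreal (exp (- ((fst p)\<^sup>2 + (snd p)\<^sup>2) / (2 * \<sigma>\<^sup>2)) / (2 * pi * \<sigma>\<^sup>2)) * f p)"
proof -
  have e: "ennreal (normal_density 0 \<sigma> a) * ennreal (normal_density 0 \<sigma> b)
      = ennreal (exp (- (a\<^sup>2 + b\<^sup>2) / (2 * \<sigma>\<^sup>2)) / (2 * pi * \<sigma>\<^sup>2))" for a b
    by (subst ennreal_mult[symmetric]) (auto simp only: phi2[OF s] normal_density_nonneg)
  show ?thesis
    unfolding N2_density[OF s] I2_def
    by (subst nn_integral_density) (auto intro!: nn_integral_cong simp: e)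
qed

lemma rot_measurable3[measurable]: "rot c s \<in> borel \<Otimes>\<^sub>M borel \<rightarrow>\<^sub>M borel \<Otimes>\<^sub>M borel"
  unfolding rot_def by measurable

lemma ennreal_div_helper: "0 \<le> x \<Longrightarrow> 0 < K \<Longrightarrow> ennreal (x / K) = ennreal (1 / K) * ennreal x"
  by (simp add: ennreal_mult[symmetric])

lemma N2_chi2:
  assumes s: "\<sigma> > 0" and T: "T \<ge> 0"
  shows "(\<integral>\<^sup>+ p. indicator {p. T < (fst p)\<^sup>2 + (snd p)\<^sup>2} p \<partial>N2 \<sigma>) = ennreal (exp (- T / (2 * \<sigma>\<^sup>2)))"
proof -
  have v: "2 * \<sigma>\<^sup>2 > 0" using s by simp
  have "(\<integral>\<^sup>+ p. indicator {p. T < (fst p)\<^sup>2 + (snd p)\<^sup>2} p \<partial>N2 \<sigma>)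
     = I2 (\<lambda>p. ennreal (exp (- ((fst p)\<^sup>2 + (snd p)\<^sup>2) / (2 * \<sigma>\<^sup>2)) / (2 * pi * \<sigma>\<^sup>2)) * indicator {p. T < (fst p)\<^sup>2 + (snd p)\<^sup>2} p)"
    by (rule N2_integral[OF s]) measurable
  also have "\<dots> = I2 (\<lambda>p. ennreal (1 / (2 * pi * \<sigma>\<^sup>2)) * Ef (2 * \<sigma>\<^sup>2) T p)"
    unfolding Ef_def
  proof (intro arg_cong[where f=I2] ext)
    fix p :: "real \<times> real"
    show "ennreal (exp (- ((fst p)\<^sup>2 + (snd p)\<^sup>2) / (2 * \<sigma>\<^sup>2)) / (2 * pi * \<sigma>\<^sup>2)) * indicator {p. T < (fst p)\<^sup>2 + (snd p)\<^sup>2} p =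
      ennreal (1 / (2 * pi * \<sigma>\<^sup>2)) * (ennreal (exp (- ((fst p)\<^sup>2 + (snd p)\<^sup>2) / (2 * \<sigma>\<^sup>2))) * indicator {p. T < (fst p)\<^sup>2 + (snd p)\<^sup>2} p)"
      using s by (subst ennreal_div_helper) (auto simp: mult.assoc)
  qed
  also have "\<dots> = ennreal (1 / (2 * pi * \<sigma>\<^sup>2)) * I2 (Ef (2 * \<sigma>\<^sup>2) T)"
    unfolding I2_def by (rule nn_integral_cmult) measurable
  also have "\<dots> = ennreal (exp (- T / (2 * \<sigma>\<^sup>2)))"
    unfolding I2_Ef[OF v T] using s by (simp add: ennreal_mult''[symmetric])
  finally show ?thesis .
qed

lemma N2_rot:
  assumes s: "\<sigma> > 0" and f[measurable]: "f \<in> borel_measurable (lborel \<Otimes>\<^sub>M lborel)"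
    and cs: "c\<^sup>2 + s\<^sup>2 = 1"
  shows "(\<integral>\<^sup>+ p. f (rot c s p) \<partial>N2 \<sigma>) = (\<integral>\<^sup>+ p. f p \<partial>N2 \<sigma>)"
proof -
  define g where "g = (\<lambda>p. ennreal (exp (- ((fst p)\<^sup>2 + (snd p)\<^sup>2) / (2 * \<sigma>\<^sup>2)) / (2 * pi * \<sigma>\<^sup>2)) * f p)"
  have [measurable]: "g \<in> borel_measurable (lborel \<Otimes>\<^sub>M lborel)" unfolding g_def by measurable
  have nr: "(fst (rot c s p))\<^sup>2 + (snd (rot c s p))\<^sup>2 = (fst p)\<^sup>2 + (snd p)\<^sup>2" for p
  proof -
    have "(fst (rot c s p))\<^sup>2 + (snd (rot c s p))\<^sup>2 = (c\<^sup>2 + s\<^sup>2) * ((fst p)\<^sup>2 + (snd p)\<^sup>2)"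
      unfolding rot_def by (simp add: power2_eq_square algebra_simps)
    then show ?thesis using cs by simp
  qed
  have nr': "- (fst (rot c s p))\<^sup>2 - (snd (rot c s p))\<^sup>2 = - (fst p)\<^sup>2 - (snd p)\<^sup>2" for p
    using nr[of p] by simp
  have [measurable]: "(\<lambda>p. f (rot c s p)) \<in> borel_measurable (lborel \<Otimes>\<^sub>M lborel)"
    by measurable
  have "(\<integral>\<^sup>+ p. f (rot c s p) \<partial>N2 \<sigma>) = I2 (\<lambda>p. g (rot c s p))"
    by (subst N2_integral[OF s]) (auto simp: g_def nr nr')
  also have "\<dots> = I2 g" by (rule rotI2[OF _ cs]) measurable
  also have "\<dots> = (\<integral>\<^sup>+ p. f p \<partial>N2 \<sigma>)"
    by (subst N2_integral[OF s]) (auto simp: g_def)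
  finally show ?thesis .
qed

abbreviation ND :: "real \<Rightarrow> real measure" where
  "ND \<sigma> \<equiv> density lborel (normal_density 0 \<sigma>)"

lemma conv1:
  assumes s: "\<sigma> > 0" and t: "\<tau> > 0" and g[measurable]: "g \<in> borel_measurable borel"
  shows "(\<integral>\<^sup>+ a. \<integral>\<^sup>+ b. g (a + b) \<partial>ND \<tau> \<partial>ND \<sigma>) = (\<integral>\<^sup>+ u. g u \<partial>ND (sqrt (\<tau>\<^sup>2 + \<sigma>\<^sup>2)))"
proof -
  have "(\<integral>\<^sup>+ a. \<integral>\<^sup>+ b. g (a + b) \<partial>ND \<tau> \<partial>ND \<sigma>)
      = (\<integral>\<^sup>+ a. ennreal (normal_density 0 \<sigma> a) * \<integral>\<^sup>+ b. ennreal (normal_density 0 \<tau> b) * g (a + b) \<partial>lborel \<partial>lborel)"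
    by (simp add: nn_integral_density)
  also have "\<dots> = (\<integral>\<^sup>+ a. ennreal (normal_density 0 \<sigma> a) * \<integral>\<^sup>+ u. ennreal (normal_density 0 \<tau> (u - a)) * g u \<partial>lborel \<partial>lborel)"
  proof (rule nn_integral_cong)
    fix a :: real
    have "(\<integral>\<^sup>+ b. ennreal (normal_density 0 \<tau> b) * g (a + b) \<partial>lborel)
        = (\<integral>\<^sup>+ u. ennreal (normal_density 0 \<tau> ((- a + 1 * u) - a + a)) * g (a + (- a + 1 * u)) \<partial>lborel)"
      using nn_integral_real_affine[of "\<lambda>b. ennreal (normal_density 0 \<tau> b) * g (a + b)" 1 "- a"] by simp
    also have "\<dots> = (\<integral>\<^sup>+ u. ennreal (normal_density 0 \<tau> (u - a)) * g u \<partial>lborel)"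
      by simp
    finally show "ennreal (normal_density 0 \<sigma> a) * (\<integral>\<^sup>+ b. ennreal (normal_density 0 \<tau> b) * g (a + b) \<partial>lborel)
      = ennreal (normal_density 0 \<sigma> a) * (\<integral>\<^sup>+ u. ennreal (normal_density 0 \<tau> (u - a)) * g u \<partial>lborel)" by simp
  qed
  also have "\<dots> = (\<integral>\<^sup>+ a. \<integral>\<^sup>+ u. ennreal (normal_density 0 \<tau> (u - a) * normal_density 0 \<sigma> a) * g u \<partial>lborel \<partial>lborel)"
    by (intro nn_integral_cong) (simp add: nn_integral_cmult[symmetric] ennreal_mult mult.assoc mult.left_commute)
  also have "\<dots> = (\<integral>\<^sup>+ u. \<integral>\<^sup>+ a. ennreal (normal_density 0 \<tau> (u - a) * normal_density 0 \<sigma> a) * g u \<partial>lborel \<partial>lborel)"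
    by (rule lborel_pair.Fubini'[symmetric]) measurable
  also have "\<dots> = (\<integral>\<^sup>+ u. (\<integral>\<^sup>+ a. ennreal (normal_density 0 \<tau> (u - a) * normal_density 0 \<sigma> a) \<partial>lborel) * g u \<partial>lborel)"
    by (intro nn_integral_cong) (simp add: nn_integral_multc)
  also have "\<dots> = (\<integral>\<^sup>+ u. ennreal (normal_density 0 (sqrt (\<tau>\<^sup>2 + \<sigma>\<^sup>2)) u) * g u \<partial>lborel)"
    by (simp add: conv_normal_density_zero_mean[OF t s, THEN fun_cong])
  also have "\<dots> = (\<integral>\<^sup>+ u. g u \<partial>ND (sqrt (\<tau>\<^sup>2 + \<sigma>\<^sup>2)))"
    by (simp add: nn_integral_density)
  finally show ?thesis .
qed

lemma sf_ND: "\<sigma> > 0 \<Longrightarrow> sigma_finite_measure (ND \<sigma>)"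
  by (intro prob_space_imp_sigma_finite prob_space_normal_density)

lemma N2_iter:
  assumes s: "\<sigma> > 0" and f[measurable]: "f \<in> borel_measurable (lborel \<Otimes>\<^sub>M lborel)"
  shows "(\<integral>\<^sup>+ p. f p \<partial>N2 \<sigma>) = (\<integral>\<^sup>+ a. \<integral>\<^sup>+ b. f (a, b) \<partial>ND \<sigma> \<partial>ND \<sigma>)"
proof -
  interpret S: sigma_finite_measure "ND \<sigma>" by (rule sf_ND[OF s])
  show ?thesis unfolding N2_def
    by (rule S.nn_integral_fst[symmetric]) measurable
qed

lemma conv2:
  assumes s: "\<sigma> > 0" and t: "\<tau> > 0" and f[measurable]: "f \<in> borel_measurable (lborel \<Otimes>\<^sub>M lborel)"
  shows "(\<integral>\<^sup>+ w. \<integral>\<^sup>+ z. f (fst w + fst z, snd w + snd z) \<partial>N2 \<tau> \<partial>N2 \<sigma>) = (\<integral>\<^sup>+ v. f v \<partial>N2 (sqrt (\<tau>\<^sup>2 + \<sigma>\<^sup>2)))"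
proof -
  interpret S: sigma_finite_measure "ND \<sigma>" by (rule sf_ND[OF s])
  interpret T: sigma_finite_measure "ND \<tau>" by (rule sf_ND[OF t])
  define \<rho> where "\<rho> = sqrt (\<tau>\<^sup>2 + \<sigma>\<^sup>2)"
  have r: "\<rho> > 0" unfolding \<rho>_def using s t by (simp add: add_pos_pos)
  interpret R: sigma_finite_measure "ND \<rho>" by (rule sf_ND[OF r])
  interpret NT: prob_space "N2 \<tau>" by (rule prob_space_N2[OF t])
  interpret ST: pair_sigma_finite "ND \<sigma>" "ND \<tau>" by unfold_locales
  have "(\<integral>\<^sup>+ w. \<integral>\<^sup>+ z. f (fst w + fst z, snd w + snd z) \<partial>N2 \<tau> \<partial>N2 \<sigma>)
     = (\<integral>\<^sup>+ w1. \<integral>\<^sup>+ w2. \<integral>\<^sup>+ z1. \<integral>\<^sup>+ z2. f (w1 + z1, w2 + z2) \<partial>ND \<tau> \<partial>ND \<tau> \<partial>ND \<sigma> \<partial>ND \<sigma>)"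
    apply (subst N2_iter[OF s])
     apply measurable
    apply (intro nn_integral_cong)
    apply (subst N2_iter[OF t])
     apply measurable
    done
  also have "\<dots> = (\<integral>\<^sup>+ w1. \<integral>\<^sup>+ z1. \<integral>\<^sup>+ w2. \<integral>\<^sup>+ z2. f (w1 + z1, w2 + z2) \<partial>ND \<tau> \<partial>ND \<sigma> \<partial>ND \<tau> \<partial>ND \<sigma>)"
    apply (rule nn_integral_cong)
    apply (rule ST.Fubini'[symmetric])
    apply measurable
    done
  also have "\<dots> = (\<integral>\<^sup>+ w1. \<integral>\<^sup>+ z1. \<integral>\<^sup>+ v2. f (w1 + z1, v2) \<partial>ND \<rho> \<partial>ND \<tau> \<partial>ND \<sigma>)"
    by (intro nn_integral_cong conv1[OF s t, folded \<rho>_def]) measurable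
  also have "\<dots> = (\<integral>\<^sup>+ v1. \<integral>\<^sup>+ v2. f (v1, v2) \<partial>ND \<rho> \<partial>ND \<rho>)"
    by (rule conv1[OF s t, folded \<rho>_def]) measurable
  also have "\<dots> = (\<integral>\<^sup>+ v. f v \<partial>N2 \<rho>)"
    by (rule N2_iter[OF r, symmetric]) measurable
  finally show ?thesis unfolding \<rho>_def .
qed

lemma Exp_rep:
  assumes cr: "cr > 0" and m1: "m1 > 0"
  shows "distr (N2 (sqrt (cr * m1 / 2))) lborel (\<lambda>w. ((fst w)\<^sup>2 + (snd w)\<^sup>2) / cr)
       = density lborel (exponential_density (1 / m1))"
proof -
  define \<sigma> where "\<sigma> = sqrt (cr * m1 / 2)"
  have s: "\<sigma> > 0" unfolding \<sigma>_def using cr m1 by simp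
  have s2: "2 * \<sigma>\<^sup>2 = cr * m1" unfolding \<sigma>_def using cr m1 by simp
  interpret P: prob_space "N2 \<sigma>" by (rule prob_space_N2[OF s])
  have "distributed (N2 \<sigma>) lborel (\<lambda>w. ((fst w)\<^sup>2 + (snd w)\<^sup>2) / cr) (exponential_density (1 / m1))"
  proof (rule exponential_distributedI)
    show "(\<lambda>w. ((fst w)\<^sup>2 + (snd w)\<^sup>2) / cr) \<in> borel_measurable (N2 \<sigma>)" by measurable
    show "0 < 1 / m1" using m1 by simp
    fix a :: real assume a: "0 \<le> a"
    have sets: "{x \<in> space (N2 \<sigma>). a < ((fst x)\<^sup>2 + (snd x)\<^sup>2) / cr} \<in> sets (N2 \<sigma>)" by measurable
    have "emeasure (N2 \<sigma>) {x \<in> space (N2 \<sigma>). a < ((fst x)\<^sup>2 + (snd x)\<^sup>2) / cr}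
        = (\<integral>\<^sup>+ p. indicator {p. cr * a < (fst p)\<^sup>2 + (snd p)\<^sup>2} p \<partial>N2 \<sigma>)"
      using sets cr
      by (subst nn_integral_indicator[symmetric]) (auto intro!: nn_integral_cong simp: field_simps space_pair_measure N2_def split: split_indicator)
    also have "\<dots> = ennreal (exp (- (cr * a) / (2 * \<sigma>\<^sup>2)))"
      by (rule N2_chi2[OF s]) (use cr a in simp)
    also have "\<dots> = ennreal (exp (- a * (1 / m1)))"
      unfolding s2 using cr m1 by simp
    finally have gt: "emeasure (N2 \<sigma>) {x \<in> space (N2 \<sigma>). a < ((fst x)\<^sup>2 + (snd x)\<^sup>2) / cr} = ennreal (exp (- a * (1 / m1)))" .
    have "{x \<in> space (N2 \<sigma>). ((fst x)\<^sup>2 + (snd x)\<^sup>2) / cr \<le> a}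
        = space (N2 \<sigma>) - {x \<in> space (N2 \<sigma>). a < ((fst x)\<^sup>2 + (snd x)\<^sup>2) / cr}" by auto
    then have compl: "emeasure (N2 \<sigma>) {x \<in> space (N2 \<sigma>). ((fst x)\<^sup>2 + (snd x)\<^sup>2) / cr \<le> a}
        = 1 - emeasure (N2 \<sigma>) {x \<in> space (N2 \<sigma>). a < ((fst x)\<^sup>2 + (snd x)\<^sup>2) / cr}"
      using sets by (simp add: emeasure_compl P.emeasure_space_1 P.emeasure_finite)
    show "emeasure (N2 \<sigma>) {x \<in> space (N2 \<sigma>). ((fst x)\<^sup>2 + (snd x)\<^sup>2) / cr \<le> a} = 1 - ennreal (exp (- a * (1 / m1)))"
      using compl gt by simp
  qed
  then show ?thesis unfolding distributed_def \<sigma>_def by simp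
qed

lemma H_rot:
  assumes s: "\<sigma> > 0"
  shows "(\<integral>\<^sup>+ z. indicator {z. t < (sqrt ((fst w)\<^sup>2 + (snd w)\<^sup>2) + fst z)\<^sup>2 + (snd z)\<^sup>2} z \<partial>N2 \<sigma>)
       = (\<integral>\<^sup>+ z. indicator {z. t < (fst w + fst z)\<^sup>2 + (snd w + snd z)\<^sup>2} z \<partial>N2 \<sigma>)"
proof (cases "sqrt ((fst w)\<^sup>2 + (snd w)\<^sup>2) = 0")
  case True
  then have "fst w = 0" "snd w = 0" by (simp_all add: sum_power2_eq_zero_iff)
  then show ?thesis using True by simp
next
  case False
  define r where "r = sqrt ((fst w)\<^sup>2 + (snd w)\<^sup>2)"
  have "r \<noteq> 0" using False unfolding r_def .
  moreover have "r \<ge> 0" unfolding r_def by simp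
  ultimately have r: "r > 0" by simp
  have r2: "r\<^sup>2 = (fst w)\<^sup>2 + (snd w)\<^sup>2" unfolding r_def by simp
  define c where "c = fst w / r"
  define s' where "s' = snd w / r"
  have "0 < r\<^sup>2" using r by simp
  then have pos: "(fst w)\<^sup>2 + (snd w)\<^sup>2 > 0" using r2 by simp
  have cs: "c\<^sup>2 + s'\<^sup>2 = 1" unfolding c_def s'_def power_divide r2 add_divide_distrib[symmetric]
    using pos by (intro divide_self) linarith
  have wc: "fst w = c * r" "snd w = s' * r" unfolding c_def s'_def using r by simp_all
  define f where "f = (\<lambda>z::real \<times> real. indicator {z. t < (fst w + fst z)\<^sup>2 + (snd w + snd z)\<^sup>2} z :: ennreal)"
  have [measurable]: "f \<in> borel_measurable (lborel \<Otimes>\<^sub>M lborel)" unfolding f_def by measurable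
  have key: "(fst w + fst (rot c s' z))\<^sup>2 + (snd w + snd (rot c s' z))\<^sup>2 = (r + fst z)\<^sup>2 + (snd z)\<^sup>2" for z
  proof -
    have "(fst w + fst (rot c s' z))\<^sup>2 + (snd w + snd (rot c s' z))\<^sup>2
        = (c\<^sup>2 + s'\<^sup>2) * ((r + fst z)\<^sup>2 + (snd z)\<^sup>2)"
      unfolding wc rot_def by (simp add: power2_eq_square algebra_simps)
    then show ?thesis using cs by simp
  qed
  have "(\<integral>\<^sup>+ z. f (rot c s' z) \<partial>N2 \<sigma>) = (\<integral>\<^sup>+ z. f z \<partial>N2 \<sigma>)"
    by (rule N2_rot[OF s _ cs]) measurable
  moreover have "(\<lambda>z. f (rot c s' z)) = (\<lambda>z. indicator {z. t < (r + fst z)\<^sup>2 + (snd z)\<^sup>2} z)"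
    unfolding f_def using key by (auto split: split_indicator)
  ultimately show ?thesis unfolding f_def r_def by simp
qed

lemma q_main:
  assumes cr: "cr > 0" and m1: "m1 > 0" and Re0: "Re0 > 0" and t: "t \<ge> 0"
  shows "(\<integral>\<^sup>+ x. \<integral>\<^sup>+ z. indicator {z. t < (sqrt (cr * x) + fst z)\<^sup>2 + (snd z)\<^sup>2} z \<partial>N2 (sqrt (Re0 / 2))
           \<partial>density lborel (exponential_density (1 / m1)))
       = ennreal (exp (- t / (cr * m1 + Re0)))"
proof -
  define \<sigma>z where "\<sigma>z = sqrt (Re0 / 2)"
  define \<sigma>x where "\<sigma>x = sqrt (cr * m1 / 2)"
  have sz: "\<sigma>z > 0" unfolding \<sigma>z_def using Re0 by simp
  have sx: "\<sigma>x > 0" unfolding \<sigma>x_def using cr m1 by simp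
  interpret Z: prob_space "N2 \<sigma>z" by (rule prob_space_N2[OF sz])
  interpret X: prob_space "N2 \<sigma>x" by (rule prob_space_N2[OF sx])
  define G where "G = (\<lambda>x. \<integral>\<^sup>+ z. indicator {z. t < (sqrt (cr * x) + fst z)\<^sup>2 + (snd z)\<^sup>2} z \<partial>N2 \<sigma>z)"
  have [measurable]: "G \<in> borel_measurable borel" unfolding G_def by measurable
  have "(\<integral>\<^sup>+ x. G x \<partial>density lborel (exponential_density (1 / m1)))
      = (\<integral>\<^sup>+ x. G x \<partial>distr (N2 \<sigma>x) lborel (\<lambda>w. ((fst w)\<^sup>2 + (snd w)\<^sup>2) / cr))"
    unfolding \<sigma>x_def Exp_rep[OF cr m1] ..
  also have "\<dots> = (\<integral>\<^sup>+ w. G (((fst w)\<^sup>2 + (snd w)\<^sup>2) / cr) \<partial>N2 \<sigma>x)"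
    by (rule nn_integral_distr) measurable
  also have "\<dots> = (\<integral>\<^sup>+ w. \<integral>\<^sup>+ z. indicator {z. t < (fst w + fst z)\<^sup>2 + (snd w + snd z)\<^sup>2} z \<partial>N2 \<sigma>z \<partial>N2 \<sigma>x)"
  proof (rule nn_integral_cong)
    fix w :: "real \<times> real"
    have "sqrt (cr * (((fst w)\<^sup>2 + (snd w)\<^sup>2) / cr)) = sqrt ((fst w)\<^sup>2 + (snd w)\<^sup>2)" using cr by simp
    then show "G (((fst w)\<^sup>2 + (snd w)\<^sup>2) / cr) = (\<integral>\<^sup>+ z. indicator {z. t < (fst w + fst z)\<^sup>2 + (snd w + snd z)\<^sup>2} z \<partial>N2 \<sigma>z)"
      unfolding G_def using H_rot[OF sz, of t w] by simp
  qed
  also have "\<dots> = (\<integral>\<^sup>+ v. indicator {v. t < (fst v)\<^sup>2 + (snd v)\<^sup>2} v \<partial>N2 (sqrt (\<sigma>z\<^sup>2 + \<sigma>x\<^sup>2)))"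
    using conv2[OF sx sz, of "\<lambda>v. indicator {v. t < (fst v)\<^sup>2 + (snd v)\<^sup>2} v"] by (simp add: indicator_def)
  also have "\<dots> = ennreal (exp (- t / (2 * (sqrt (\<sigma>z\<^sup>2 + \<sigma>x\<^sup>2))\<^sup>2)))"
    by (rule N2_chi2[OF _ t]) (use sz sx in \<open>simp add: add_pos_pos\<close>)
  also have "2 * (sqrt (\<sigma>z\<^sup>2 + \<sigma>x\<^sup>2))\<^sup>2 = cr * m1 + Re0"
    unfolding \<sigma>z_def \<sigma>x_def using cr m1 Re0 by simp
  finally show ?thesis unfolding G_def \<sigma>z_def .
qed

definition R2f :: "real \<Rightarrow> obs \<Rightarrow> real" where
  "R2f cr ob = (sqrt (cr * fst (snd ob)) + fst (snd (snd ob)))\<^sup>2 + (snd (snd (snd ob)))\<^sup>2"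

lemma R2of_R2f: "R2of cr \<omega> n = R2f cr (\<omega> n)"
  unfolding R2of_def R2f_def R1of_def ..

lemma round_dist_N2: "round_dist ps m1 Re0 = measure_pmf (geometric_pmf ps) \<Otimes>\<^sub>M
    (density lborel (exponential_density (1 / m1)) \<Otimes>\<^sub>M N2 (sqrt (Re0 / 2)))"
  unfolding round_dist_def N2_def ..

lemma sets_round_dist[measurable_cong]: "sets (round_dist ps m1 Re0) = sets (count_space UNIV \<Otimes>\<^sub>M (borel \<Otimes>\<^sub>M (borel \<Otimes>\<^sub>M borel)))"
  unfolding round_dist_def
  by (intro sets_pair_measure_cong) simp_all

lemma R2f_measurable[measurable]: "R2f cr \<in> borel_measurable (round_dist ps m1 Re0)"
  unfolding R2f_def by measurable

lemma prob_space_round: 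
  assumes "m1 > 0" "Re0 > 0"
  shows "prob_space (round_dist ps m1 Re0)"
  unfolding round_dist_N2
  by (intro prob_space_pair prob_space_measure_pmf prob_space_exponential_density prob_space_N2) (use assms in auto)

lemma nn_integral_pair_snd_prob:
  assumes A: "prob_space A" and B: "sigma_finite_measure B" and f[measurable]: "f \<in> borel_measurable B"
  shows "(\<integral>\<^sup>+ p. f (snd p) \<partial>(A \<Otimes>\<^sub>M B)) = (\<integral>\<^sup>+ y. f y \<partial>B)"
proof -
  interpret B: sigma_finite_measure B by (rule B)
  interpret A: prob_space A by (rule A)
  have "(\<integral>\<^sup>+ p. f (snd p) \<partial>(A \<Otimes>\<^sub>M B)) = (\<integral>\<^sup>+ x. \<integral>\<^sup>+ y. f y \<partial>B \<partial>A)"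
    by (subst B.nn_integral_fst[symmetric]) auto
  also have "\<dots> = (\<integral>\<^sup>+ y. f y \<partial>B)"
    by (simp add: A.emeasure_space_1)
  finally show ?thesis .
qed

lemma nn_integral_pair_fst_prob:
  assumes A: "sigma_finite_measure A" and B: "prob_space B" and f[measurable]: "f \<in> borel_measurable A"
  shows "(\<integral>\<^sup>+ p. f (fst p) \<partial>(A \<Otimes>\<^sub>M B)) = (\<integral>\<^sup>+ x. f x \<partial>A)"
proof -
  interpret B: prob_space B by (rule B)
  have "(\<integral>\<^sup>+ p. f (fst p) \<partial>(A \<Otimes>\<^sub>M B)) = (\<integral>\<^sup>+ x. \<integral>\<^sup>+ y. f x \<partial>B \<partial>A)"
    by (subst B.nn_integral_fst[symmetric]) auto
  also have "\<dots> = (\<integral>\<^sup>+ x. f x \<partial>A)"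
    by (simp add: B.emeasure_space_1)
  finally show ?thesis .
qed

lemma round_R2_tail:
  assumes cr: "cr > 0" and m1: "m1 > 0" and Re0: "Re0 > 0" and t: "t \<ge> 0"
  shows "(\<integral>\<^sup>+ ob. indicator {ob. t < R2f cr ob} ob \<partial>round_dist ps m1 Re0) = ennreal (exp (- t / (cr * m1 + Re0)))"
proof -
  have sz: "sqrt (Re0 / 2) > 0" using Re0 by simp
  interpret Z: prob_space "N2 (sqrt (Re0 / 2))" by (rule prob_space_N2[OF sz])
  interpret E: prob_space "density lborel (exponential_density (1 / m1))"
    by (rule prob_space_exponential_density) (use m1 in simp)
  interpret EZ: pair_sigma_finite "density lborel (exponential_density (1 / m1))" "N2 (sqrt (Re0 / 2))"
    by unfold_locales
  have "(\<integral>\<^sup>+ ob. indicator {ob. t < R2f cr ob} ob \<partial>round_dist ps m1 Re0)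
      = (\<integral>\<^sup>+ ob. (\<lambda>y. indicator {y. t < (sqrt (cr * fst y) + fst (snd y))\<^sup>2 + (snd (snd y))\<^sup>2} y) (snd ob)
           \<partial>(measure_pmf (geometric_pmf ps) \<Otimes>\<^sub>M (density lborel (exponential_density (1 / m1)) \<Otimes>\<^sub>M N2 (sqrt (Re0 / 2)))))"
    unfolding round_dist_N2 by (intro nn_integral_cong) (simp add: R2f_def split: split_indicator)
  also have "\<dots> = (\<integral>\<^sup>+ y. indicator {y. t < (sqrt (cr * fst y) + fst (snd y))\<^sup>2 + (snd (snd y))\<^sup>2} y
           \<partial>(density lborel (exponential_density (1 / m1)) \<Otimes>\<^sub>M N2 (sqrt (Re0 / 2))))"
    by (rule nn_integral_pair_snd_prob) (auto intro!: prob_space_measure_pmf EZ.sigma_finite_measure_axioms)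
  also have "\<dots> = (\<integral>\<^sup>+ x. \<integral>\<^sup>+ z. indicator {z. t < (sqrt (cr * x) + fst z)\<^sup>2 + (snd z)\<^sup>2} z \<partial>N2 (sqrt (Re0 / 2))
           \<partial>density lborel (exponential_density (1 / m1)))"
    by (subst Z.nn_integral_fst[symmetric]) (auto intro!: nn_integral_cong simp: indicator_def)
  also have "\<dots> = ennreal (exp (- t / (cr * m1 + Re0)))"
    by (rule q_main[OF cr m1 Re0 t])
  finally show ?thesis .
qed

lemma prod_int:
  assumes D: "prob_space D" and J: "finite J" and g[measurable]: "\<And>i. i \<in> J \<Longrightarrow> g i \<in> borel_measurable D"
  shows "(\<integral>\<^sup>+ \<omega>. (\<Prod>i\<in>J. g i (\<omega> i)) \<partial>PiM UNIV (\<lambda>_. D)) = (\<Prod>i\<in>J. \<integral>\<^sup>+ x. g i x \<partial>D)"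
proof -
  interpret D: prob_space D by (rule D)
  interpret P: product_prob_space "\<lambda>_. D" UNIV by unfold_locales
  have m: "(\<lambda>x. \<Prod>i\<in>J. g i (x i)) \<in> borel_measurable (PiM J (\<lambda>_. D))"
  proof (intro borel_measurable_prod_ennreal)
    fix i assume i: "i \<in> J"
    show "(\<lambda>x. g i (x i)) \<in> borel_measurable (PiM J (\<lambda>_. D))"
      using measurable_compose[OF measurable_component_singleton[OF i] g[OF i]] by simp
  qed
  have "(\<integral>\<^sup>+ \<omega>. (\<Prod>i\<in>J. g i (\<omega> i)) \<partial>PiM UNIV (\<lambda>_. D))
      = (\<integral>\<^sup>+ \<omega>. (\<lambda>x. \<Prod>i\<in>J. g i (x i)) (restrict \<omega> J) \<partial>PiM UNIV (\<lambda>_. D))"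
    by (intro nn_integral_cong prod.cong) auto
  also have "\<dots> = (\<integral>\<^sup>+ x. (\<Prod>i\<in>J. g i (x i)) \<partial>distr (PiM UNIV (\<lambda>_. D)) (PiM J (\<lambda>_. D)) (\<lambda>\<omega>. restrict \<omega> J))"
    apply (rule nn_integral_distr[symmetric])
     apply (rule measurable_restrict_subset, simp)
    using m by (simp add: measurable_distr_eq1)
  also have "\<dots> = (\<integral>\<^sup>+ x. (\<Prod>i\<in>J. g i (x i)) \<partial>PiM J (\<lambda>_. D))"
    by (subst P.distr_PiM_restrict_finite[OF J]) auto
  also have "\<dots> = (\<Prod>i\<in>J. \<integral>\<^sup>+ x. g i x \<partial>D)"
    by (rule P.product_nn_integral_prod[OF J]) auto
  finally show ?thesis .
qed

locale lsetup =
  fixes ps tau R1 m1 cr Re0 :: real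
  assumes ps: "0 < ps" "ps < 1" and tau: "0 < tau" "tau < 1" and R1: "0 < R1"
    and m1: "0 < m1" and cr: "0 < cr" and Re0: "0 < Re0"
begin

abbreviation "D \<equiv> round_dist ps m1 Re0"
abbreviation "M \<equiv> sample_space ps m1 Re0"

lemma M_def: "M = PiM UNIV (\<lambda>_. D)" unfolding sample_space_def ..

lemma probD: "prob_space D" by (rule prob_space_round) (use m1 Re0 in auto)

sublocale D: prob_space D by (rule probD)

lemma probM: "prob_space M" unfolding M_def by (rule prob_space_PiM) (rule probD)

sublocale MM: prob_space M by (rule probM)

lemma sets_M[measurable_cong]: "sets M = sets (PiM UNIV (\<lambda>_. D))" unfolding M_def ..

lemma geo_K: "(\<integral>\<^sup>+ k. ennreal (real k + 1) \<partial>measure_pmf (geometric_pmf ps)) = ennreal (1 / ps)"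
proof -
  have p: "ps \<in> {0<..1}" using ps by simp
  interpret G: prob_space "measure_pmf (geometric_pmf ps)" by (rule prob_space_measure_pmf)
  have int: "integrable (measure_pmf (geometric_pmf ps)) (\<lambda>k. real k + 1)"
    using integrable_real_geometric_pmf[OF p] by simp
  have "(\<integral>\<^sup>+ k. ennreal (real k + 1) \<partial>measure_pmf (geometric_pmf ps)) = ennreal (\<integral>k. real k + 1 \<partial>measure_pmf (geometric_pmf ps))"
    by (rule nn_integral_eq_integral[OF int]) simp
  also have "(\<integral>k. real k + 1 \<partial>measure_pmf (geometric_pmf ps)) = (1 - ps) / ps + 1"
    using integrable_real_geometric_pmf[OF p] expectation_geometric_pmf[OF p] by simp
  also have "(1 - ps) / ps + 1 = 1 / ps" using ps by (simp add: field_simps)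
  finally show ?thesis .
qed

lemma D_K: "(\<integral>\<^sup>+ ob. ennreal (real (fst ob) + 1) \<partial>D) = ennreal (1 / ps)"
proof -
  have sz: "sqrt (Re0 / 2) > 0" using Re0 by simp
  have "prob_space (density lborel (exponential_density (1 / m1)) \<Otimes>\<^sub>M N2 (sqrt (Re0 / 2)))"
    by (intro prob_space_pair prob_space_exponential_density prob_space_N2 sz) (use m1 in simp)
  then have "(\<integral>\<^sup>+ ob. ennreal (real (fst ob) + 1) \<partial>D) = (\<integral>\<^sup>+ k. ennreal (real k + 1) \<partial>measure_pmf (geometric_pmf ps))"
    unfolding round_dist_N2
    by (intro nn_integral_pair_fst_prob) (auto intro: prob_space_imp_sigma_finite prob_space_measure_pmf)
  then show ?thesis using geo_K by simp
qed

lemma M_comp0: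
  assumes [measurable]: "f \<in> borel_measurable D"
  shows "(\<integral>\<^sup>+ \<omega>. f (\<omega> i) \<partial>M) = (\<integral>\<^sup>+ ob. f ob \<partial>D)"
  using prod_int[OF probD, of "{i}" "\<lambda>_. f"] unfolding M_def by simp

lemma K0_int: "integrable M (\<lambda>\<omega>. real (Kof \<omega> 0) * tau + 1)"
  and K0_val: "(\<integral>\<omega>. real (Kof \<omega> 0) * tau + 1 \<partial>M) = tau / ps + 1"
proof -
  have [measurable]: "(\<lambda>\<omega>. real (Kof \<omega> 0) * tau + 1) \<in> borel_measurable M"
    unfolding Kof_def by measurable
  have "(\<integral>\<^sup>+ \<omega>. ennreal (real (Kof \<omega> 0) * tau + 1) \<partial>M) = (\<integral>\<^sup>+ \<omega>. ennreal tau * ennreal (real (fst (\<omega> 0)) + 1) + 1 \<partial>M)"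
    using tau by (intro nn_integral_cong) (simp add: Kof_def ennreal_mult'[symmetric] algebra_simps)
  also have "\<dots> = ennreal tau * (\<integral>\<^sup>+ \<omega>. ennreal (real (fst (\<omega> 0)) + 1) \<partial>M) + 1"
    by (subst nn_integral_add) (auto simp: nn_integral_cmult MM.emeasure_space_1)
  also have "(\<integral>\<^sup>+ \<omega>. ennreal (real (fst (\<omega> 0)) + 1) \<partial>M) = ennreal (1 / ps)"
    using M_comp0[of "\<lambda>ob. ennreal (real (fst ob) + 1)" 0] D_K by simp
  also have "ennreal tau * ennreal (1 / ps) + 1 = ennreal (tau / ps + 1)"
  proof -
    have "ennreal (tau / ps + 1) = ennreal (tau / ps) + ennreal 1"
      by (rule ennreal_plus) (use tau ps in auto)
    then show ?thesis using tau ps by (simp add: ennreal_mult'[symmetric])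
  qed
  finally have nn: "(\<integral>\<^sup>+ \<omega>. ennreal (real (Kof \<omega> 0) * tau + 1) \<partial>M) = ennreal (tau / ps + 1)" .
  show "integrable M (\<lambda>\<omega>. real (Kof \<omega> 0) * tau + 1)"
    by (rule integrableI_nonneg) (use tau nn in auto)
  show "(\<integral>\<omega>. real (Kof \<omega> 0) * tau + 1 \<partial>M) = tau / ps + 1"
  proof -
    have "(\<integral>\<omega>. real (Kof \<omega> 0) * tau + 1 \<partial>M) = enn2real (\<integral>\<^sup>+ \<omega>. ennreal (real (Kof \<omega> 0) * tau + 1) \<partial>M)"
      by (rule integral_eq_nn_integral) (use tau in auto)
    also have "\<dots> = tau / ps + 1" unfolding nn using tau ps by (simp del: ennreal_plus)
    finally show ?thesis .
  qed
qed

end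

context lsetup begin

lemma T_ge: "total_time tau cr P \<omega> \<ge> real (Kof \<omega> 0) * tau + 1"
proof -
  define N where "N = stop_round cr P \<omega>"
  have "real (Kof \<omega> 0) * tau \<le> (\<Sum>j\<le>N. real (Kof \<omega> j) * tau)"
    by (rule member_le_sum[of 0 "{..N}" "\<lambda>j. real (Kof \<omega> j) * tau"]) (use tau in auto)
  moreover have "0 \<le> tau * real (card {j. j < N \<and> dec1 cr P \<omega> j = Probe})" using tau by simp
  ultimately show ?thesis unfolding total_time_def Let_def N_def[symmetric] by linarith
qed

lemma reward_le: "reward R1 tau cr P \<omega> \<le> R1"
  unfolding reward_def Let_def using R1 tau by (auto simp: mult_left_le)

lemma reward_nonneg: "reward R1 tau cr P \<omega> \<ge> 0"
  unfolding reward_def Let_def using R1 tau by auto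

lemma ratio_upper:
  assumes adm: "admissible ps tau R1 m1 cr Re0 P"
  shows "(\<integral>\<omega>. reward R1 tau cr P \<omega> \<partial>M) / (\<integral>\<omega>. total_time tau cr P \<omega> \<partial>M) \<le> R1 / (1 + tau / ps)"
proof -
  have Tint: "integrable M (total_time tau cr P)" using adm unfolding admissible_def by simp
  have ET: "tau / ps + 1 \<le> (\<integral>\<omega>. total_time tau cr P \<omega> \<partial>M)"
    using integral_mono[OF K0_int Tint T_ge] K0_val by simp
  have Er: "(\<integral>\<omega>. reward R1 tau cr P \<omega> \<partial>M) \<le> R1"
  proof (cases "integrable M (reward R1 tau cr P)")
    case True
    have "(\<integral>\<omega>. reward R1 tau cr P \<omega> \<partial>M) \<le> (\<integral>\<omega>. R1 \<partial>M)"
      by (rule integral_mono[OF True]) (auto intro: reward_le)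
    then show ?thesis by (simp add: MM.prob_space)
  next
    case False
    then show ?thesis using R1 by (simp add: not_integrable_integral_eq)
  qed
  have Er0: "0 \<le> (\<integral>\<omega>. reward R1 tau cr P \<omega> \<partial>M)"
    by (rule integral_nonneg_AE) (auto intro: reward_nonneg)
  have pos: "0 < 1 + tau / ps" using tau ps by (simp add: add_pos_nonneg)
  have "(\<integral>\<omega>. reward R1 tau cr P \<omega> \<partial>M) / (\<integral>\<omega>. total_time tau cr P \<omega> \<partial>M)
      \<le> R1 / (\<integral>\<omega>. total_time tau cr P \<omega> \<partial>M)"
    by (rule divide_right_mono[OF Er]) (use ET pos in linarith)
  also have "\<dots> \<le> R1 / (1 + tau / ps)"
    by (rule divide_left_mono) (use ET pos R1 in auto)
  finally show ?thesis .
qed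

end

context lsetup begin

definition P0 :: policy where "P0 = ((\<lambda>h x. Probe), (\<lambda>h y. R1 \<le> snd (snd y)))"

definition NN :: "(nat \<Rightarrow> obs) \<Rightarrow> nat" where "NN \<omega> = (LEAST m. R1 \<le> R2f cr (\<omega> m))"

lemma dec1_P0[simp]: "dec1 cr P0 \<omega> m = Probe"
  unfolding dec1_def P0_def by simp

lemma stops_P0: "stops cr P0 \<omega> m \<longleftrightarrow> R1 \<le> R2f cr (\<omega> m)"
  unfolding stops_def P0_def dec1_def by (simp add: R2of_R2f)

lemma stop_round_P0: "stop_round cr P0 \<omega> = NN \<omega>"
  unfolding stop_round_def NN_def stops_P0 ..

lemma T_P0: "total_time tau cr P0 \<omega> = (\<Sum>j\<le>NN \<omega>. real (Kof \<omega> j) * tau) + tau * real (NN \<omega>) + 1"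
  unfolding total_time_def Let_def stop_round_P0 by simp

lemma r_P0: "reward R1 tau cr P0 \<omega> = (if R1 \<le> R2f cr (\<omega> (NN \<omega>)) then R1 * (1 - tau) else 0)"
  unfolding reward_def Let_def stop_round_P0 by (simp add: R2of_R2f)

lemma NN_measurable[measurable]: "NN \<in> measurable M (count_space UNIV)"
  unfolding NN_def by measurable

lemma T_P0_measurable: "total_time tau cr P0 \<in> borel_measurable M"
proof -
  have [measurable]: "(\<lambda>\<omega>. \<Sum>j\<le>n. real (Kof \<omega> j) * tau) \<in> borel_measurable M" for n
    unfolding Kof_def by measurable
  have "(\<lambda>\<omega>. \<Sum>j\<le>NN \<omega>. real (Kof \<omega> j) * tau) \<in> borel_measurable M"
    by (rule measurable_compose_countable[where f="\<lambda>n \<omega>. \<Sum>j\<le>n. real (Kof \<omega> j) * tau"]) measurable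
  then show ?thesis unfolding T_P0[abs_def] by measurable
qed

lemma r_P0_measurable: "reward R1 tau cr P0 \<in> borel_measurable M"
proof -
  have "(\<lambda>\<omega>. R2f cr (\<omega> (NN \<omega>))) \<in> borel_measurable M"
    by (rule measurable_compose_countable[where f="\<lambda>n \<omega>. R2f cr (\<omega> n)"]) measurable
  then show ?thesis unfolding r_P0[abs_def] by measurable
qed

end

context lsetup begin

lemma one_minus_ennreal: "0 \<le> x \<Longrightarrow> 1 - ennreal x = ennreal (1 - x)"
  using ennreal_minus[of x 1] by simp

definition qq :: real where "qq = measure D {ob \<in> space D. R1 \<le> R2f cr ob}"

lemma space_D[simp]: "space D = UNIV"
  unfolding round_dist_def by (simp add: space_pair_measure)

lemma qq_ge: "exp (- R1 / (cr * m1 + Re0)) \<le> qq"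
proof -
  have s1[measurable]: "{ob \<in> space D. R1 < R2f cr ob} \<in> sets D" by measurable
  have s2[measurable]: "{ob \<in> space D. R1 \<le> R2f cr ob} \<in> sets D" by measurable
  have "emeasure D {ob \<in> space D. R1 < R2f cr ob} = (\<integral>\<^sup>+ ob. indicator {ob. R1 < R2f cr ob} ob \<partial>D)"
    using s1 by (subst nn_integral_indicator) auto
  also have "\<dots> = ennreal (exp (- R1 / (cr * m1 + Re0)))"
    by (rule round_R2_tail[OF cr m1 Re0]) (use R1 in simp)
  finally have "measure D {ob \<in> space D. R1 < R2f cr ob} = exp (- R1 / (cr * m1 + Re0))"
    by (simp add: D.emeasure_eq_measure)
  moreover have "measure D {ob \<in> space D. R1 < R2f cr ob} \<le> qq"
    unfolding qq_def by (rule D.finite_measure_mono) (use s2 in auto)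
  ultimately show ?thesis by simp
qed

lemma qq_pos: "0 < qq" using qq_ge by (smt (verit) exp_gt_zero)

lemma qq_le1: "qq \<le> 1" unfolding qq_def by simp

lemma B_int: "(\<integral>\<^sup>+ ob. indicator {ob. R2f cr ob < R1} ob \<partial>D) = ennreal (1 - qq)"
proof -
  have s[measurable]: "{ob \<in> space D. R1 \<le> R2f cr ob} \<in> sets D" by measurable
  have "{ob. R2f cr ob < R1} = space D - {ob \<in> space D. R1 \<le> R2f cr ob}" by auto
  then have "(\<integral>\<^sup>+ ob. indicator {ob. R2f cr ob < R1} ob \<partial>D) = emeasure D (space D - {ob \<in> space D. R1 \<le> R2f cr ob})"
    by (simp add: nn_integral_indicator[OF s[THEN sets.compl_sets]] del: space_D)
  also have "\<dots> = ennreal (1 - qq)"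
    unfolding qq_def by (subst emeasure_compl) (auto simp: D.emeasure_space_1 D.emeasure_eq_measure D.prob_space one_minus_ennreal simp del: space_D)
  finally show ?thesis .
qed

definition Bp :: "nat \<Rightarrow> (nat \<Rightarrow> obs) \<Rightarrow> ennreal" where
  "Bp j \<omega> = (\<Prod>i\<in>{..<j}. indicator {ob. R2f cr ob < R1} (\<omega> i))"

lemma Bp_measurable[measurable]: "Bp j \<in> borel_measurable M"
  unfolding Bp_def by measurable

lemma Bp_int: "(\<integral>\<^sup>+ \<omega>. Bp j \<omega> \<partial>M) = ennreal ((1 - qq) ^ j)"
proof -
  have "(\<integral>\<^sup>+ \<omega>. Bp j \<omega> \<partial>M) = (\<Prod>i\<in>{..<j}. \<integral>\<^sup>+ ob. indicator {ob. R2f cr ob < R1} ob \<partial>D)"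
    unfolding Bp_def M_def by (rule prod_int[OF probD]) auto
  also have "\<dots> = ennreal ((1 - qq) ^ j)"
    unfolding B_int using qq_le1 by (simp add: ennreal_power)
  finally show ?thesis .
qed

lemma KBp_int: "(\<integral>\<^sup>+ \<omega>. ennreal (real (Kof \<omega> j)) * Bp j \<omega> \<partial>M) = ennreal (1 / ps * (1 - qq) ^ j)"
proof -
  define g where "g = (\<lambda>i ob. if i = j then ennreal (real (fst ob) + 1) else indicator {ob. R2f cr ob < R1} ob)"
  have g_meas: "g i \<in> borel_measurable D" for i unfolding g_def by (cases "i = j") simp_all
  have eq: "ennreal (real (Kof \<omega> j)) * Bp j \<omega> = (\<Prod>i\<in>{..j}. g i (\<omega> i))" for \<omega>
  proof -
    have "{..j} = insert j {..<j}" by auto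
    then have "(\<Prod>i\<in>{..j}. g i (\<omega> i)) = g j (\<omega> j) * (\<Prod>i\<in>{..<j}. g i (\<omega> i))" by simp
    also have "(\<Prod>i\<in>{..<j}. g i (\<omega> i)) = Bp j \<omega>" unfolding Bp_def g_def by (intro prod.cong) auto
    finally show ?thesis by (simp add: g_def Kof_def add.commute)
  qed
  have "(\<integral>\<^sup>+ \<omega>. ennreal (real (Kof \<omega> j)) * Bp j \<omega> \<partial>M) = (\<Prod>i\<in>{..j}. \<integral>\<^sup>+ ob. g i ob \<partial>D)"
    unfolding eq M_def by (rule prod_int[OF probD]) (auto intro: g_meas)
  also have "\<dots> = (\<integral>\<^sup>+ ob. g j ob \<partial>D) * (\<Prod>i\<in>{..<j}. \<integral>\<^sup>+ ob. g i ob \<partial>D)"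
  proof -
    have "{..j} = insert j {..<j}" by auto
    then show ?thesis by simp
  qed
  also have "(\<Prod>i\<in>{..<j}. \<integral>\<^sup>+ ob. g i ob \<partial>D) = ennreal ((1 - qq) ^ j)"
    unfolding g_def using qq_le1 by (simp add: B_int ennreal_power)
  also have "(\<integral>\<^sup>+ ob. g j ob \<partial>D) = ennreal (1 / ps)" unfolding g_def using D_K by simp
  also have "ennreal (1 / ps) * ennreal ((1 - qq) ^ j) = ennreal (1 / ps * (1 - qq) ^ j)"
    by (rule ennreal_mult'[symmetric]) (use ps in simp)
  finally show ?thesis .
qed

end

context lsetup begin

lemma Bp_eq:
  assumes ex: "\<exists>m. R1 \<le> R2f cr (\<omega> m)"
  shows "Bp j \<omega> = (if j \<le> NN \<omega> then 1 else 0)"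
proof (cases "j \<le> NN \<omega>")
  case True
  have "\<And>i. i < j \<Longrightarrow> \<not> R1 \<le> R2f cr (\<omega> i)"
    using True unfolding NN_def by (metis not_less_Least order_less_le_trans)
  then have "Bp j \<omega> = 1" unfolding Bp_def by (intro prod.neutral) (auto simp: not_le)
  then show ?thesis using True by simp
next
  case False
  have S: "R1 \<le> R2f cr (\<omega> (NN \<omega>))" unfolding NN_def using ex by (rule LeastI_ex)
  have "NN \<omega> \<in> {..<j}" using False by simp
  then have "Bp j \<omega> = 0" unfolding Bp_def using S
    by (intro prod_zero) (auto intro!: bexI[of _ "NN \<omega>"])
  then show ?thesis using False by simp
qed

lemma T_series:
  assumes ex: "\<exists>m. R1 \<le> R2f cr (\<omega> m)"
  shows "ennreal (total_time tau cr P0 \<omega>)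
    = (\<Sum>j. ennreal tau * (ennreal (real (Kof \<omega> j)) * Bp j \<omega>)) + (\<Sum>j. ennreal tau * Bp (Suc j) \<omega>) + 1"
proof -
  have s1: "(\<Sum>j. ennreal tau * (ennreal (real (Kof \<omega> j)) * Bp j \<omega>)) = (\<Sum>j\<le>NN \<omega>. ennreal tau * (ennreal (real (Kof \<omega> j)) * Bp j \<omega>))"
    by (rule suminf_finite) (auto simp: Bp_eq[OF ex])
  also have "\<dots> = (\<Sum>j\<le>NN \<omega>. ennreal (real (Kof \<omega> j) * tau))"
    by (intro sum.cong) (auto simp: Bp_eq[OF ex] ennreal_mult'' mult.commute)
  also have "\<dots> = ennreal (\<Sum>j\<le>NN \<omega>. real (Kof \<omega> j) * tau)"
    using tau by (intro sum_ennreal) simp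
  finally have A: "(\<Sum>j. ennreal tau * (ennreal (real (Kof \<omega> j)) * Bp j \<omega>)) = ennreal (\<Sum>j\<le>NN \<omega>. real (Kof \<omega> j) * tau)" .
  have "(\<Sum>j. ennreal tau * Bp (Suc j) \<omega>) = (\<Sum>j<NN \<omega>. ennreal tau * Bp (Suc j) \<omega>)"
    by (rule suminf_finite) (auto simp: Bp_eq[OF ex])
  also have "\<dots> = (\<Sum>j<NN \<omega>. ennreal tau)"
    by (intro sum.cong) (auto simp: Bp_eq[OF ex])
  also have "\<dots> = ennreal (tau * real (NN \<omega>))"
    using tau by (simp add: ennreal_of_nat_eq_real_of_nat ennreal_mult'' mult.commute)
  finally have B: "(\<Sum>j. ennreal tau * Bp (Suc j) \<omega>) = ennreal (tau * real (NN \<omega>))" .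
  have nn1: "0 \<le> (\<Sum>j\<le>NN \<omega>. real (Kof \<omega> j) * tau)" using tau by (intro sum_nonneg) simp
  have nn2: "0 \<le> tau * real (NN \<omega>)" using tau by simp
  show ?thesis unfolding A B T_P0 using nn1 nn2 by (simp add: ennreal_plus)
qed

end

context lsetup begin

lemma Kof_measurable[measurable]: "(\<lambda>\<omega>. Kof \<omega> j) \<in> M \<rightarrow>\<^sub>M count_space UNIV"
  unfolding Kof_def by measurable

lemma r_bounds: "0 \<le> 1 - qq" "1 - qq < 1" using qq_pos qq_le1 by auto

lemma AE_stop: "AE \<omega> in M. \<exists>m. R1 \<le> R2f cr (\<omega> m)"
proof -
  define E where "E = {\<omega> \<in> space M. \<not> (\<exists>m. R1 \<le> R2f cr (\<omega> m))}"
  have E[measurable]: "E \<in> sets M" unfolding E_def by measurable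
  have le: "emeasure M E \<le> ennreal ((1 - qq) ^ j)" for j
  proof -
    have "emeasure M E = (\<integral>\<^sup>+ \<omega>. indicator E \<omega> \<partial>M)" using E by simp
    also have "\<dots> \<le> (\<integral>\<^sup>+ \<omega>. Bp j \<omega> \<partial>M)"
      by (intro nn_integral_mono) (auto simp: E_def Bp_def not_le split: split_indicator)
    finally show ?thesis unfolding Bp_int .
  qed
  have lim: "(\<lambda>j. ennreal ((1 - qq) ^ j)) \<longlonglongrightarrow> ennreal 0"
    by (intro tendsto_ennrealI LIMSEQ_power_zero) (use r_bounds in simp)
  have "emeasure M E \<le> ennreal 0"
    by (rule tendsto_le[OF trivial_limit_sequentially lim tendsto_const]) (use le in auto)
  then have "E \<in> null_sets M" using E by (simp add: null_sets_def)
  then show ?thesis by (rule AE_I') (auto simp: E_def)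
qed

definition ET0 :: real where "ET0 = tau / ps / qq + tau * (1 - qq) / qq + 1"

lemma ET_nn: "(\<integral>\<^sup>+ \<omega>. ennreal (total_time tau cr P0 \<omega>) \<partial>M) = ennreal ET0"
proof -
  have meas1[measurable]: "(\<lambda>\<omega>. ennreal (real (Kof \<omega> j))) \<in> borel_measurable M" for j
    unfolding Kof_def by measurable
  have "(\<integral>\<^sup>+ \<omega>. ennreal (total_time tau cr P0 \<omega>) \<partial>M)
      = (\<integral>\<^sup>+ \<omega>. (\<Sum>j. ennreal tau * (ennreal (real (Kof \<omega> j)) * Bp j \<omega>)) + (\<Sum>j. ennreal tau * Bp (Suc j) \<omega>) + 1 \<partial>M)"
    apply (rule nn_integral_cong_AE)
    using AE_stop apply eventually_elim
    apply (rule T_series, assumption)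
    done
  also have "\<dots> = (\<integral>\<^sup>+ \<omega>. (\<Sum>j. ennreal tau * (ennreal (real (Kof \<omega> j)) * Bp j \<omega>)) \<partial>M)
      + (\<integral>\<^sup>+ \<omega>. (\<Sum>j. ennreal tau * Bp (Suc j) \<omega>) \<partial>M) + (\<integral>\<^sup>+ \<omega>. 1 \<partial>M)"
  proof -
    have m1: "(\<lambda>\<omega>. \<Sum>j. ennreal tau * (ennreal (real (Kof \<omega> j)) * Bp j \<omega>)) \<in> borel_measurable M" by measurable
    have m2: "(\<lambda>\<omega>. \<Sum>j. ennreal tau * Bp (Suc j) \<omega>) \<in> borel_measurable M" by measurable
    show ?thesis using m1 m2 by (simp add: nn_integral_add)
  qed
  also have "(\<integral>\<^sup>+ \<omega>. (\<Sum>j. ennreal tau * (ennreal (real (Kof \<omega> j)) * Bp j \<omega>)) \<partial>M)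
      = (\<Sum>j. ennreal tau * ennreal (1 / ps * (1 - qq) ^ j))"
    by (subst nn_integral_suminf) (measurable, simp add: nn_integral_cmult KBp_int)
  also have "(\<integral>\<^sup>+ \<omega>. (\<Sum>j. ennreal tau * Bp (Suc j) \<omega>) \<partial>M)
      = (\<Sum>j. ennreal tau * ennreal ((1 - qq) ^ Suc j))"
    by (subst nn_integral_suminf) (measurable, simp add: nn_integral_cmult Bp_int)
  also have "(\<integral>\<^sup>+ \<omega>. 1 \<partial>M) = 1" by (simp add: MM.emeasure_space_1)
  also have "(\<Sum>j. ennreal tau * ennreal (1 / ps * (1 - qq) ^ j)) = ennreal (tau / ps / qq)"
  proof -
    have "(\<Sum>j. ennreal tau * ennreal (1 / ps * (1 - qq) ^ j)) = (\<Sum>j. ennreal (tau / ps * (1 - qq) ^ j))"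
      using tau by (intro suminf_cong) (simp add: ennreal_mult'[symmetric])
    also have "\<dots> = ennreal (\<Sum>j. tau / ps * (1 - qq) ^ j)"
      by (rule suminf_ennreal2) (use tau ps r_bounds in \<open>auto intro!: summable_mult summable_geometric\<close>)
    also have "(\<Sum>j. tau / ps * (1 - qq) ^ j) = tau / ps / qq"
      using r_bounds by (subst suminf_mult) (auto intro!: summable_geometric simp: suminf_geometric)
    finally show ?thesis .
  qed
  also have "(\<Sum>j. ennreal tau * ennreal ((1 - qq) ^ Suc j)) = ennreal (tau * (1 - qq) / qq)"
  proof -
    have "(\<Sum>j. ennreal tau * ennreal ((1 - qq) ^ Suc j)) = (\<Sum>j. ennreal (tau * (1 - qq) * (1 - qq) ^ j))"
      using tau by (intro suminf_cong) (simp add: ennreal_mult'[symmetric] mult.assoc)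
    also have "\<dots> = ennreal (\<Sum>j. tau * (1 - qq) * (1 - qq) ^ j)"
      by (rule suminf_ennreal2) (use tau ps r_bounds in \<open>auto intro!: summable_mult summable_geometric\<close>)
    also have "(\<Sum>j. tau * (1 - qq) * (1 - qq) ^ j) = tau * (1 - qq) / qq"
      using r_bounds by (subst suminf_mult) (auto intro!: summable_geometric simp: suminf_geometric)
    finally show ?thesis .
  qed
  also have "ennreal (tau / ps / qq) + ennreal (tau * (1 - qq) / qq) + 1 = ennreal ET0"
    unfolding ET0_def using tau ps qq_pos r_bounds by (simp add: ennreal_plus)
  finally show ?thesis .
qed

end

context lsetup begin

lemma T_nonneg: "0 \<le> total_time tau cr P \<omega>"
  using T_ge[where P=P and \<omega>=\<omega>] tau by (smt (verit) of_nat_0_le_iff mult_nonneg_nonneg)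

lemma T_int: "integrable M (total_time tau cr P0)"
  by (rule integrableI_nonneg) (auto simp: ET_nn T_P0_measurable intro!: AE_I2 T_nonneg)

lemma ET0_eq: "ET0 = (1 - tau) + tau * (1 + 1 / ps) * (1 / qq)"
  unfolding ET0_def using qq_pos ps by (simp add: field_simps)

lemma ET0_pos: "0 < ET0" unfolding ET0_eq using tau ps qq_pos by (simp add: add_pos_nonneg)

lemma T_val: "(\<integral>\<omega>. total_time tau cr P0 \<omega> \<partial>M) = ET0"
proof -
  have "(\<integral>\<omega>. total_time tau cr P0 \<omega> \<partial>M) = enn2real (\<integral>\<^sup>+ \<omega>. ennreal (total_time tau cr P0 \<omega>) \<partial>M)"
    by (rule integral_eq_nn_integral) (auto simp: T_P0_measurable intro!: AE_I2 T_nonneg)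
  also have "\<dots> = ET0" unfolding ET_nn using ET0_pos by simp
  finally show ?thesis .
qed

lemma r_val: "(\<integral>\<omega>. reward R1 tau cr P0 \<omega> \<partial>M) = R1 * (1 - tau)"
proof -
  have "(\<integral>\<omega>. reward R1 tau cr P0 \<omega> \<partial>M) = (\<integral>\<omega>. R1 * (1 - tau) \<partial>M)"
  proof (rule integral_cong_AE)
    show "AE \<omega> in M. reward R1 tau cr P0 \<omega> = R1 * (1 - tau)"
      using AE_stop
    proof eventually_elim
      case (elim \<omega>)
      have "R1 \<le> R2f cr (\<omega> (NN \<omega>))" unfolding NN_def using elim by (rule LeastI_ex)
      then show ?case unfolding r_P0 by simp
    qed
  qed (auto simp: r_P0_measurable)
  also have "\<dots> = R1 * (1 - tau)" by (simp add: MM.prob_space)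
  finally show ?thesis .
qed

lemma adm_P0: "admissible ps tau R1 m1 cr Re0 P0"
  unfolding admissible_def
proof -
  have "stops cr P0 \<omega> = (\<lambda>m. R1 \<le> R2f cr (\<omega> m))" for \<omega> by (rule ext) (rule stops_P0)
  then show "(AE \<omega> in M. \<exists>m. stops cr P0 \<omega> m) \<and> total_time tau cr P0 \<in> borel_measurable M \<and>
    reward R1 tau cr P0 \<in> borel_measurable M \<and> integrable M (total_time tau cr P0)"
    using AE_stop T_P0_measurable r_P0_measurable T_int by simp
qed

lemma ratio_P0:
  "(1 - tau) * R1 / ((1 - tau) + tau * (1 + 1 / ps) * exp (R1 / (cr * m1 + Re0)))
     \<le> (\<integral>\<omega>. reward R1 tau cr P0 \<omega> \<partial>M) / (\<integral>\<omega>. total_time tau cr P0 \<omega> \<partial>M)"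
proof -
  have q1: "1 / qq \<le> exp (R1 / (cr * m1 + Re0))"
  proof -
    have "1 / qq \<le> 1 / exp (- R1 / (cr * m1 + Re0))"
      by (rule divide_left_mono[OF qq_ge]) (use qq_pos in auto)
    also have "\<dots> = exp (R1 / (cr * m1 + Re0))" by (simp add: exp_minus field_simps)
    finally show ?thesis .
  qed
  have c: "0 \<le> tau * (1 + 1 / ps)" using tau ps by simp
  have ET0_le: "ET0 \<le> (1 - tau) + tau * (1 + 1 / ps) * exp (R1 / (cr * m1 + Re0))"
    unfolding ET0_eq using mult_left_mono[OF q1 c] by simp
  show ?thesis unfolding T_val r_val
    using divide_left_mono[OF ET0_le, of "(1 - tau) * R1"] ET0_pos ET0_le tau R1
    by (simp add: mult.commute mult_pos_pos)
qed

end

theorem lemma4: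
  fixes ps tau R1 m1 cr Re0 :: real
  assumes "0 < ps" "ps < 1" "0 < tau" "tau < 1" "0 < R1" "0 < m1" "0 < cr" "0 < Re0"
  shows "(1 - tau) * R1 / ((1 - tau) + tau * (1 + 1 / ps) * exp (R1 / (cr * m1 + Re0)))
           \<le> opt_throughput ps tau R1 m1 cr Re0
       \<and> opt_throughput ps tau R1 m1 cr Re0 \<le> R1 / (1 + tau / ps)"
proof -
  interpret lsetup ps tau R1 m1 cr Re0 by unfold_locales (use assms in auto)
  define S where "S = {(\<integral>\<omega>. reward R1 tau cr P \<omega> \<partial>sample_space ps m1 Re0) /
          (\<integral>\<omega>. total_time tau cr P \<omega> \<partial>sample_space ps m1 Re0) | P. admissible ps tau R1 m1 cr Re0 P}"
  have opt: "opt_throughput ps tau R1 m1 cr Re0 = Sup S" unfolding opt_throughput_def S_def ..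
  have mem: "(\<integral>\<omega>. reward R1 tau cr P0 \<omega> \<partial>sample_space ps m1 Re0) /
          (\<integral>\<omega>. total_time tau cr P0 \<omega> \<partial>sample_space ps m1 Re0) \<in> S"
    unfolding S_def using adm_P0 by blast
  have bound: "x \<le> R1 / (1 + tau / ps)" if "x \<in> S" for x
    using that ratio_upper unfolding S_def by blast
  have bdd: "bdd_above S" using bound by (rule bdd_aboveI)
  have ne: "S \<noteq> {}" using mem by blast
  have "(1 - tau) * R1 / ((1 - tau) + tau * (1 + 1 / ps) * exp (R1 / (cr * m1 + Re0))) \<le> Sup S"
    using ratio_P0 cSup_upper[OF mem bdd] by linarith
  moreover have "Sup S \<le> R1 / (1 + tau / ps)"
    using cSup_least[OF ne] bound by blast
  ultimately show ?thesis unfolding opt by simp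
qed

end
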